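(* There exists an $8$-rep-tile $A\subset\mathbb{R}^3$ which has a hole in the following sense: $A$ is homeomorphic to a solid torus $D^2\times S^1$, and its interior is connected and homeomorphic to an open solid torus. More concretely, $A$ can be chosen as a union of four rectangular boxes, each congruent to $[0,4]\times[0,2]\times[0,1]$, with pairwise disjoint interiors, such that $A$ together with a copy of $A$ rotated by $180^\circ$ forms a rectangular box of size $8\times 4\times 2$. Moreover, eight copies of $A$ assemble to $2A$.
   Context: A closed bounded set $A\subset\mathbb{R}^d$ with non-empty interior is called an $m$-rep-tile if there are sets $A_1,\dots,A_m$, each congruent to $A$, such that any two different $A_j,A_k$ have no common interior points and the union $A_1\cup\dots\cup A_m$ is geometrically similar to $A$. Two sets are congruent if one is the image of the other under an isometry of $\mathbb{R}^d$. *)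

theory Defs
  imports "HOL-Analysis.Analysis"
begin

definition congruent :: "'a::metric_space set \<Rightarrow> 'a set \<Rightarrow> bool" where
  "congruent A B \<longleftrightarrow>
     (\<exists>f. surj f \<and> (\<forall>x y. dist (f x) (f y) = dist x y) \<and> f ` A = B)"

definition similar_sets :: "'a::metric_space set \<Rightarrow> 'a set \<Rightarrow> bool" where
  "similar_sets A B \<longleftrightarrow>
     (\<exists>f r. r > 0 \<and> surj f \<and> (\<forall>x y. dist (f x) (f y) = r * dist x y) \<and> f ` A = B)"

definition rep_tile :: "nat \<Rightarrow> 'a::euclidean_space set \<Rightarrow> bool" where
  "rep_tile m A \<longleftrightarrow> closed A \<and> bounded A \<and> interior A \<noteq> {} \<and>
     (\<exists>T :: nat \<Rightarrow> 'a set.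
        (\<forall>i<m. congruent (T i) A) \<and>
        (\<forall>i<m. \<forall>j<m. i \<noteq> j \<longrightarrow> interior (T i) \<inter> interior (T j) = {}) \<and>
        similar_sets (\<Union>i<m. T i) A)"

definition solid_torus :: "((real^2) \<times> (real^2)) set" where
  "solid_torus = cball 0 1 \<times> sphere 0 1"

definition open_solid_torus :: "((real^2) \<times> (real^2)) set" where
  "open_solid_torus = ball 0 1 \<times> sphere 0 1"

text \<open>A rotation by 180 degrees (half-turn about some axis), composed with a translation.\<close>
definition half_turn_motion :: "(real^3 \<Rightarrow> real^3) \<Rightarrow> bool" where
  "half_turn_motion g \<longleftrightarrow>
     (\<exists>R b. orthogonal_matrix R \<and> det R = 1 \<and> R ** R = mat 1 \<and> R \<noteq> mat 1 \<and>
            (\<forall>x. g x = R *v x + b))"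

end

theory Submission
  imports Defs
begin


definition gge :: "(real \<Rightarrow> real \<Rightarrow> real) \<Rightarrow> bool" where
  "gge g \<longleftrightarrow> continuous_on UNIV (\<lambda>q. g (fst q) (snd q)) \<and>
     (\<forall>t a b. t > 0 \<longrightarrow> g (t*a) (t*b) = t * g a b) \<and>
     (\<forall>a b. (a \<noteq> 0 \<or> b \<noteq> 0) \<longrightarrow> g a b > 0)"

lemma gge_zero: "gge g \<Longrightarrow> g 0 0 = 0"
proof -
  assume "gge g"
  then have "\<forall>t a b. t > 0 \<longrightarrow> g (t*a) (t*b) = t * g a b" unfolding gge_def by simp
  then have "g (2*0) (2*0) = 2 * g 0 0" by (metis zero_less_numeral)
  then show ?thesis by simp
qed

lemma gge_pos: "gge g \<Longrightarrow> a \<noteq> 0 \<or> b \<noteq> 0 \<Longrightarrow> g a b > 0"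
  unfolding gge_def by simp

lemma gge_nonneg: "gge g \<Longrightarrow> g a b \<ge> 0"
proof (cases "a = 0 \<and> b = 0")
  case True
  assume "gge g" then show ?thesis using True gge_zero[of g] by simp
next
  case False
  assume "gge g" then show ?thesis using False gge_pos[of g a b] by simp
qed

lemma gge_hom: "gge g \<Longrightarrow> t > 0 \<Longrightarrow> g (t*a) (t*b) = t * g a b"
  unfolding gge_def by simp

lemma gge_cont3: "gge g \<Longrightarrow> continuous_on UNIV (\<lambda>p::real^3. g (p$i - ci) (p$j - cj))"
proof -
  assume g: "gge g"
  have "continuous_on UNIV (\<lambda>p::real^3. (p$i - ci, p$j - cj))"
    by (intro continuous_intros)
  moreover have "continuous_on UNIV (\<lambda>q. g (fst q) (snd q))" using g unfolding gge_def by blast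
  ultimately have "continuous_on UNIV ((\<lambda>q. g (fst q) (snd q)) \<circ> (\<lambda>p::real^3. (p$i - ci, p$j - cj)))"
    by (meson continuous_on_compose continuous_on_subset subset_UNIV)
  then show ?thesis by (simp add: o_def)
qed

definition rr :: "(real \<Rightarrow> real \<Rightarrow> real) \<Rightarrow> (real \<Rightarrow> real \<Rightarrow> real) \<Rightarrow> real \<Rightarrow> real \<Rightarrow> real" where
  "rr g1 g2 a b = g1 a b / g2 a b"

definition radF :: "(real \<Rightarrow> real \<Rightarrow> real) \<Rightarrow> (real \<Rightarrow> real \<Rightarrow> real) \<Rightarrow> 3 \<Rightarrow> 3 \<Rightarrow> real \<Rightarrow> real \<Rightarrow> real^3 \<Rightarrow> real^3" where
  "radF g1 g2 i j ci cj p = p + (rr g1 g2 (p$i - ci) (p$j - cj) - 1) *\<^sub>R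
      ((p$i - ci) *\<^sub>R axis i 1 + (p$j - cj) *\<^sub>R axis j 1)"

lemma radF_i: "i \<noteq> j \<Longrightarrow> radF g1 g2 i j ci cj p $ i = ci + rr g1 g2 (p$i - ci) (p$j - cj) * (p$i - ci)"
  by (simp add: radF_def axis_def algebra_simps)
lemma radF_j: "i \<noteq> j \<Longrightarrow> radF g1 g2 i j ci cj p $ j = cj + rr g1 g2 (p$i - ci) (p$j - cj) * (p$j - cj)"
  by (simp add: radF_def axis_def algebra_simps)
lemma radF_k: "k \<noteq> i \<Longrightarrow> k \<noteq> j \<Longrightarrow> radF g1 g2 i j ci cj p $ k = p $ k"
  by (simp add: radF_def axis_def)

lemma rr_pos: "gge g1 \<Longrightarrow> gge g2 \<Longrightarrow> a \<noteq> 0 \<or> b \<noteq> 0 \<Longrightarrow> rr g1 g2 a b > 0"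
  unfolding rr_def using gge_pos by (meson divide_pos_pos)

lemma rr_hom: "gge g1 \<Longrightarrow> gge g2 \<Longrightarrow> t > 0 \<Longrightarrow> rr g1 g2 (t*a) (t*b) = rr g1 g2 a b"
  unfolding rr_def by (simp add: gge_hom)

lemma rr_inv: "gge g1 \<Longrightarrow> gge g2 \<Longrightarrow> a \<noteq> 0 \<or> b \<noteq> 0 \<Longrightarrow> rr g2 g1 a b * rr g1 g2 a b = 1"
  unfolding rr_def using gge_pos[of g1 a b] gge_pos[of g2 a b] by simp

lemma rr_transport: "gge g1 \<Longrightarrow> gge g2 \<Longrightarrow>
   g2 (rr g1 g2 a b * a) (rr g1 g2 a b * b) = g1 a b"
proof (cases "a = 0 \<and> b = 0")
  case True
  assume "gge g1" "gge g2" then show ?thesis using True gge_zero[of g1] gge_zero[of g2] by simp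
next
  case False
  assume g: "gge g1" "gge g2"
  then have "rr g1 g2 a b > 0" using False rr_pos by blast
  then have "g2 (rr g1 g2 a b * a) (rr g1 g2 a b * b) = rr g1 g2 a b * g2 a b"
    using g gge_hom by blast
  also have "\<dots> = g1 a b" unfolding rr_def using gge_pos[OF g(2), of a b] False by simp
  finally show ?thesis .
qed

lemma radF_fix: "gge g1 \<Longrightarrow> gge g2 \<Longrightarrow> g1 (p$i - ci) (p$j - cj) = g2 (p$i - ci) (p$j - cj) \<Longrightarrow>
   radF g1 g2 i j ci cj p = p"
proof (cases "p$i - ci = 0 \<and> p$j - cj = 0")
  case True then show ?thesis by (simp add: radF_def)
next
  case False
  assume g: "gge g1" "gge g2" and eq: "g1 (p$i - ci) (p$j - cj) = g2 (p$i - ci) (p$j - cj)"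
  have "g2 (p$i - ci) (p$j - cj) > 0" using gge_pos[OF g(2)] False by blast
  then have "rr g1 g2 (p$i - ci) (p$j - cj) = 1" unfolding rr_def using eq by simp
  then show ?thesis by (simp add: radF_def)
qed

lemma radF_inv:
  assumes g: "gge g1" "gge g2" and ij: "i \<noteq> j"
  shows "radF g2 g1 i j ci cj (radF g1 g2 i j ci cj p) = p"
proof -
  define a where "a = p$i - ci"
  define b where "b = p$j - cj"
  define r where "r = rr g1 g2 a b"
  have Fi: "radF g1 g2 i j ci cj p $ i - ci = r * a" using radF_i[OF ij] by (simp add: a_def b_def r_def)
  have Fj: "radF g1 g2 i j ci cj p $ j - cj = r * b" using radF_j[OF ij] by (simp add: a_def b_def r_def)
  have key: "rr g2 g1 (r*a) (r*b) * r * a = a \<and> rr g2 g1 (r*a) (r*b) * r * b = b"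
  proof (cases "a = 0 \<and> b = 0")
    case True then show ?thesis by simp
  next
    case False
    then have "r > 0" unfolding r_def using rr_pos g by blast
    then have "rr g2 g1 (r*a) (r*b) = rr g2 g1 a b" using rr_hom g by blast
    then have "rr g2 g1 (r*a) (r*b) * r = 1" unfolding r_def using rr_inv[OF g] False by simp
    then show ?thesis by simp
  qed
  show ?thesis
  proof (subst vec_eq_iff, intro allI)
    fix k
    consider "k = i" | "k = j" | "k \<noteq> i \<and> k \<noteq> j" by blast
    then show "radF g2 g1 i j ci cj (radF g1 g2 i j ci cj p) $ k = p $ k"
    proof cases
      case 1
      have "radF g2 g1 i j ci cj (radF g1 g2 i j ci cj p) $ i = ci + rr g2 g1 (r*a) (r*b) * (r*a)"
        using radF_i[OF ij, of g2 g1 ci cj "radF g1 g2 i j ci cj p"] Fi Fj by simp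
      also have "\<dots> = ci + a" using key by (simp add: mult.assoc[symmetric])
      also have "\<dots> = p $ i" by (simp add: a_def)
      finally show ?thesis using 1 by simp
    next
      case 2
      have "radF g2 g1 i j ci cj (radF g1 g2 i j ci cj p) $ j = cj + rr g2 g1 (r*a) (r*b) * (r*b)"
        using radF_j[OF ij, of g2 g1 ci cj "radF g1 g2 i j ci cj p"] Fi Fj by simp
      also have "\<dots> = cj + b" using key by (simp add: mult.assoc[symmetric])
      also have "\<dots> = p $ j" by (simp add: b_def)
      finally show ?thesis using 2 by simp
    next
      case 3 then show ?thesis by (simp add: radF_k)
    qed
  qed
qed


lemma radF_offsets:
  assumes ij: "i \<noteq> j"
  shows "radF g1 g2 i j ci cj p $ i - ci = rr g1 g2 (p$i - ci) (p$j - cj) * (p$i - ci)"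
    and "radF g1 g2 i j ci cj p $ j - cj = rr g1 g2 (p$i - ci) (p$j - cj) * (p$j - cj)"
  using radF_i[OF ij] radF_j[OF ij] by simp_all

lemma radF_cont:
  assumes g: "gge g1" "gge g2" and K: "0 \<le> K" "\<And>a b. g1 a b \<le> K * g2 a b" and ij: "i \<noteq> j"
  shows "continuous_on UNIV (radF g1 g2 i j ci cj)"
proof (rule continuous_at_imp_continuous_on, intro ballI)
  fix p :: "real^3"
  show "isCont (radF g1 g2 i j ci cj) p"
  proof (cases "p$i - ci = 0 \<and> p$j - cj = 0")
    case False
    have c1: "isCont (\<lambda>p. g1 (p$i-ci) (p$j-cj)) p"
      using gge_cont3[OF g(1), of i ci j cj] continuous_on_eq_continuous_at open_UNIV by blast
    have c2: "isCont (\<lambda>p. g2 (p$i-ci) (p$j-cj)) p"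
      using gge_cont3[OF g(2), of i ci j cj] continuous_on_eq_continuous_at open_UNIV by blast
    have nz: "g2 (p$i-ci) (p$j-cj) \<noteq> 0" using gge_pos[OF g(2)] False by (metis less_irrefl)
    show ?thesis unfolding radF_def rr_def
      by (intro continuous_intros c1 c2 nz)
  next
    case True
    then have Fp: "radF g1 g2 i j ci cj p = p" by (simp add: radF_def)
    have bound: "dist (radF g1 g2 i j ci cj q) p \<le> (2*K+3) * dist q p" for q
    proof -
      define a where "a = q$i - ci"
      define b where "b = q$j - cj"
      define r where "r = rr g1 g2 a b"
      define w where "w = a *\<^sub>R axis i (1::real) + b *\<^sub>R axis j 1"
      have r0: "0 \<le> r" unfolding r_def rr_def using gge_nonneg[OF g(1)] gge_nonneg[OF g(2)] by simp
      have r1: "r \<le> K"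
      proof (cases "g2 a b = 0")
        case True then show ?thesis unfolding r_def rr_def using K by simp
      next
        case False
        then have "g2 a b > 0" using gge_nonneg[OF g(2), of a b] by simp
        then show ?thesis unfolding r_def rr_def using K(2)[of a b] by (simp add: divide_le_eq)
      qed
      have ai: "\<bar>a\<bar> \<le> norm (q - p)" using component_le_norm_cart[of "q - p" i] True by (simp add: a_def)
      have bj: "\<bar>b\<bar> \<le> norm (q - p)" using component_le_norm_cart[of "q - p" j] True by (simp add: b_def)
      have nw: "norm w \<le> \<bar>a\<bar> + \<bar>b\<bar>"
        unfolding w_def using norm_triangle_ineq[of "a *\<^sub>R axis i (1::real)" "b *\<^sub>R axis j 1"]
        by simp
      have "radF g1 g2 i j ci cj q - p = (q - p) + (r - 1) *\<^sub>R w"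
        by (simp add: radF_def r_def w_def a_def b_def)
      then have "norm (radF g1 g2 i j ci cj q - p) \<le> norm (q - p) + \<bar>r - 1\<bar> * norm w"
        by (metis norm_scaleR norm_triangle_ineq)
      also have "\<dots> \<le> norm (q - p) + (K + 1) * (2 * norm (q - p))"
      proof -
        have "\<bar>r - 1\<bar> \<le> K + 1" using r0 r1 by linarith
        moreover have "norm w \<le> 2 * norm (q - p)" using nw ai bj by linarith
        ultimately show ?thesis by (intro add_left_mono mult_mono) (auto simp: K)
      qed
      finally show ?thesis by (simp add: dist_norm algebra_simps)
    qed
    show ?thesis unfolding continuous_at_eps_delta
    proof (intro allI impI)
      fix e :: real assume e: "e > 0"
      show "\<exists>d>0. \<forall>x'. dist x' p < d \<longrightarrow> dist (radF g1 g2 i j ci cj x') (radF g1 g2 i j ci cj p) < e"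
      proof (intro exI[of _ "e / (2*K+3)"] conjI allI impI)
        show "e / (2*K+3) > 0" using e K by simp
      next
        fix x' assume "dist x' p < e / (2*K+3)"
        then have "(2*K+3) * dist x' p < e" using K by (simp add: field_simps)
        then show "dist (radF g1 g2 i j ci cj x') (radF g1 g2 i j ci cj p) < e"
          using bound[of x'] Fp by simp
      qed
    qed
  qed
qed

lemma radF_homeo:
  assumes g: "gge g1" "gge g2" and K: "0 \<le> K" "\<And>a b. g1 a b \<le> K * g2 a b" "\<And>a b. g2 a b \<le> K * g1 a b"
    and ij: "i \<noteq> j"
  shows "homeomorphism UNIV UNIV (radF g1 g2 i j ci cj) (radF g2 g1 i j ci cj)"
  apply (rule homeomorphismI)
  using radF_cont[OF g K(1,2) ij] radF_cont[OF g(2,1) K(1,3) ij] radF_inv[OF g ij] radF_inv[OF g(2,1) ij]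
  by auto

lemma radF_image:
  assumes g: "gge g1" "gge g2" and ij: "i \<noteq> j" and k: "k \<noteq> i" "k \<noteq> j"
  and H1: "\<And>p. p \<in> S \<Longrightarrow> g1 (p$i-ci) (p$j-cj) = g2 (p$i-ci) (p$j-cj) \<Longrightarrow> p \<in> T"
  and H2: "\<And>p q. p \<in> S \<Longrightarrow> g1 (p$i-ci) (p$j-cj) \<noteq> g2 (p$i-ci) (p$j-cj) \<Longrightarrow> q$k = p$k \<Longrightarrow>
              g2 (q$i-ci) (q$j-cj) = g1 (p$i-ci) (p$j-cj) \<Longrightarrow> q \<in> T"
  and H3: "\<And>q. q \<in> T \<Longrightarrow> g2 (q$i-ci) (q$j-cj) = g1 (q$i-ci) (q$j-cj) \<Longrightarrow> q \<in> S"
  and H4: "\<And>q p. q \<in> T \<Longrightarrow> g2 (q$i-ci) (q$j-cj) \<noteq> g1 (q$i-ci) (q$j-cj) \<Longrightarrow> p$k = q$k \<Longrightarrow>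
              g1 (p$i-ci) (p$j-cj) = g2 (q$i-ci) (q$j-cj) \<Longrightarrow> p \<in> S"
  shows "radF g1 g2 i j ci cj ` S = T"
proof
  show "radF g1 g2 i j ci cj ` S \<subseteq> T"
  proof
    fix x assume "x \<in> radF g1 g2 i j ci cj ` S"
    then obtain p where p: "p \<in> S" "x = radF g1 g2 i j ci cj p" by blast
    show "x \<in> T"
    proof (cases "g1 (p$i-ci) (p$j-cj) = g2 (p$i-ci) (p$j-cj)")
      case True then show ?thesis using radF_fix[OF g True] p H1 by simp
    next
      case False
      show ?thesis
        using H2[OF p(1) False, of x] p(2) radF_k[OF k] rr_transport[OF g] radF_offsets[OF ij] by simp
    qed
  qed
next
  show "T \<subseteq> radF g1 g2 i j ci cj ` S"
  proof
    fix q assume q: "q \<in> T"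
    define p where "p = radF g2 g1 i j ci cj q"
    have "p \<in> S"
    proof (cases "g2 (q$i-ci) (q$j-cj) = g1 (q$i-ci) (q$j-cj)")
      case True then show ?thesis using radF_fix[OF g(2,1) True] q H3 p_def by simp
    next
      case False
      show ?thesis
        using H4[OF q False, of p] p_def radF_k[OF k] rr_transport[OF g(2,1)] radF_offsets[OF ij] by simp
    qed
    moreover have "radF g1 g2 i j ci cj p = q" using radF_inv[OF g(2,1) ij] p_def by simp
    ultimately show "q \<in> radF g1 g2 i j ci cj ` S" by force
  qed
qed


definition bx :: "real \<Rightarrow> real \<Rightarrow> real \<Rightarrow> real \<Rightarrow> real \<Rightarrow> real \<Rightarrow> (real^3) set" where
  "bx a1 a2 a3 b1 b2 b3 = cbox (vector [a1,a2,a3]) (vector [b1,b2,b3])"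

lemma mem_bx: "p \<in> bx a1 a2 a3 b1 b2 b3 \<longleftrightarrow> a1 \<le> p$1 \<and> p$1 \<le> b1 \<and> a2 \<le> p$2 \<and> p$2 \<le> b2 \<and> a3 \<le> p$3 \<and> p$3 \<le> b3"
  by (auto simp: bx_def mem_box_cart forall_3)

lemma max_scale: "(t::real) > 0 \<Longrightarrow> max (t*x) (t*y) = t * max x y"
  by (simp add: max_def)

definition ga1 :: "real \<Rightarrow> real \<Rightarrow> real" where "ga1 a b = max (\<bar>a\<bar>/2) (max (-2*b) (2*b/3))"
definition ga2 :: "real \<Rightarrow> real \<Rightarrow> real" where "ga2 a b = max (\<bar>a\<bar>/2) (2*\<bar>b\<bar>)"
definition gb1 :: "real \<Rightarrow> real \<Rightarrow> real" where "gb1 a b = max \<bar>a\<bar> (max (-2*b) (2*b/3))"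
definition gb2 :: "real \<Rightarrow> real \<Rightarrow> real" where "gb2 a b = max \<bar>a\<bar> (2*\<bar>b\<bar>)"

lemma gge_ga1: "gge ga1"
proof -
  have "ga1 (t*a) (t*b) = t * ga1 a b" if "t > 0" for t a b
  proof -
    have "ga1 (t*a) (t*b) = max (t*(\<bar>a\<bar>/2)) (max (t*(-2*b)) (t*(2*b/3)))"
      unfolding ga1_def using that by (simp add: abs_mult)
    also have "\<dots> = t * ga1 a b" unfolding ga1_def using that by (simp only: max_scale)
    finally show ?thesis .
  qed
  moreover have "continuous_on UNIV (\<lambda>q. ga1 (fst q) (snd q))" unfolding ga1_def by (auto intro!: continuous_intros)
  moreover have "ga1 a b > 0" if "a \<noteq> 0 \<or> b \<noteq> 0" for a b using that unfolding ga1_def by (auto split: abs_split)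
  ultimately show ?thesis unfolding gge_def by blast
qed

lemma gge_ga2: "gge ga2"
proof -
  have "ga2 (t*a) (t*b) = t * ga2 a b" if "t > 0" for t a b
  proof -
    have "ga2 (t*a) (t*b) = max (t*(\<bar>a\<bar>/2)) (t*(2*\<bar>b\<bar>))"
      unfolding ga2_def using that by (simp add: abs_mult)
    also have "\<dots> = t * ga2 a b" unfolding ga2_def using that by (simp only: max_scale)
    finally show ?thesis .
  qed
  moreover have "continuous_on UNIV (\<lambda>q. ga2 (fst q) (snd q))" unfolding ga2_def by (auto intro!: continuous_intros)
  moreover have "ga2 a b > 0" if "a \<noteq> 0 \<or> b \<noteq> 0" for a b using that unfolding ga2_def by (auto split: abs_split)
  ultimately show ?thesis unfolding gge_def by blast
qed

lemma gge_gb1: "gge gb1"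
proof -
  have "gb1 (t*a) (t*b) = t * gb1 a b" if "t > 0" for t a b
  proof -
    have "gb1 (t*a) (t*b) = max (t*\<bar>a\<bar>) (max (t*(-2*b)) (t*(2*b/3)))"
      unfolding gb1_def using that by (simp add: abs_mult)
    also have "\<dots> = t * gb1 a b" unfolding gb1_def using that by (simp only: max_scale)
    finally show ?thesis .
  qed
  moreover have "continuous_on UNIV (\<lambda>q. gb1 (fst q) (snd q))" unfolding gb1_def by (auto intro!: continuous_intros)
  moreover have "gb1 a b > 0" if "a \<noteq> 0 \<or> b \<noteq> 0" for a b using that unfolding gb1_def by (auto split: abs_split)
  ultimately show ?thesis unfolding gge_def by blast
qed

lemma gge_gb2: "gge gb2"
proof -
  have "gb2 (t*a) (t*b) = t * gb2 a b" if "t > 0" for t a b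
  proof -
    have "gb2 (t*a) (t*b) = max (t*\<bar>a\<bar>) (t*(2*\<bar>b\<bar>))"
      unfolding gb2_def using that by (simp add: abs_mult)
    also have "\<dots> = t * gb2 a b" unfolding gb2_def using that by (simp only: max_scale)
    finally show ?thesis .
  qed
  moreover have "continuous_on UNIV (\<lambda>q. gb2 (fst q) (snd q))" unfolding gb2_def by (auto intro!: continuous_intros)
  moreover have "gb2 a b > 0" if "a \<noteq> 0 \<or> b \<noteq> 0" for a b using that unfolding gb2_def by (auto split: abs_split)
  ultimately show ?thesis unfolding gge_def by blast
qed

lemma ga_bounds: "ga1 a b \<le> 3 * ga2 a b" "ga2 a b \<le> 3 * ga1 a b"
  unfolding ga1_def ga2_def by (auto simp: max_def split: abs_split)
lemma gb_bounds: "gb1 a b \<le> 3 * gb2 a b" "gb2 a b \<le> 3 * gb1 a b"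
  unfolding gb1_def gb2_def by (auto simp: max_def split: abs_split)

lemma cone_ga: "ga1 a b \<noteq> ga2 a b \<longleftrightarrow> (b > 0 \<and> 4*b > \<bar>a\<bar>)"
  unfolding ga1_def ga2_def by (auto simp: max_def split: abs_split)
lemma cone_gb: "gb1 a b \<noteq> gb2 a b \<longleftrightarrow> (b > 0 \<and> 2*b > \<bar>a\<bar>)"
  unfolding gb1_def gb2_def by (auto simp: max_def split: abs_split)
lemma le_ga1: "ga1 a b \<le> 1 \<longleftrightarrow> -2 \<le> a \<and> a \<le> 2 \<and> -1/2 \<le> b \<and> b \<le> 3/2"
  unfolding ga1_def by (auto split: abs_split)
lemma le_ga2: "ga2 a b \<le> 1 \<longleftrightarrow> -2 \<le> a \<and> a \<le> 2 \<and> -1/2 \<le> b \<and> b \<le> 1/2"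
  unfolding ga2_def by (auto split: abs_split)
lemma le_gb1: "gb1 a b \<le> 1 \<longleftrightarrow> -1 \<le> a \<and> a \<le> 1 \<and> -1/2 \<le> b \<and> b \<le> 3/2"
  unfolding gb1_def by (auto split: abs_split)
lemma le_gb2: "gb2 a b \<le> 1 \<longleftrightarrow> -1 \<le> a \<and> a \<le> 1 \<and> -1/2 \<le> b \<and> b \<le> 1/2"
  unfolding gb2_def by (auto split: abs_split)

lemma stepa_H1: fixes x y z :: real assumes "((0 \<le> x \<and> x \<le> 2 \<and> 0 \<le> y \<and> y \<le> 4 \<and> 0 \<le> z \<and> z \<le> 1) \<or> (2 \<le> x \<and> x \<le> 6 \<and> 0 \<le> y \<and> y \<le> 1 \<and> 0 \<le> z \<and> z \<le> 2) \<or> (2 \<le> x \<and> x \<le> 6 \<and> 2 \<le> y \<and> y \<le> 3 \<and> 0 \<le> z \<and> z \<le> 2) \<or> (6 \<le> x \<and> x \<le> 8 \<and> 0 \<le> y \<and> y \<le> 4 \<and> 0 \<le> z \<and> z \<le> 1))" and "\<not> (z - (1/2) > 0 \<and> 4 * (z - (1/2)) > \<bar>x - 4\<bar>)" shows "((0 \<le> x \<and> x \<le> 8 \<and> 0 \<le> y \<and> y \<le> 1 \<and> 0 \<le> z \<and> z \<le> 1) \<or> (0 \<le> x \<and> x \<le> 8 \<and> 2 \<le> y \<and> y \<le> 3 \<and> 0 \<le> z \<and> z \<le> 1) \<or> (0 \<le> x \<and> x \<le> 2 \<and> 0 \<le> y \<and> y \<le> 4 \<and> 0 \<le> z \<and>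 z \<le> 1) \<or> (6 \<le> x \<and> x \<le> 8 \<and> 0 \<le> y \<and> y \<le> 4 \<and> 0 \<le> z \<and> z \<le> 1))"
  using assms(1)
proof (elim disjE)
  assume h: "0 \<le> x \<and> x \<le> 2 \<and> 0 \<le> y \<and> y \<le> 4 \<and> 0 \<le> z \<and> z \<le> 1"
  have "0 \<le> x \<and> x \<le> 2 \<and> 0 \<le> y \<and> y \<le> 4 \<and> 0 \<le> z \<and> z \<le> 1" using h assms(2) by (auto split: abs_split)
  then show ?thesis by blast
next
  assume h: "2 \<le> x \<and> x \<le> 6 \<and> 0 \<le> y \<and> y \<le> 1 \<and> 0 \<le> z \<and> z \<le> 2"
  have "0 \<le> x \<and> x \<le> 8 \<and> 0 \<le> y \<and> y \<le> 1 \<and> 0 \<le> z \<and> z \<le> 1" using h assms(2) by (auto split: abs_split)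
  then show ?thesis by blast
next
  assume h: "2 \<le> x \<and> x \<le> 6 \<and> 2 \<le> y \<and> y \<le> 3 \<and> 0 \<le> z \<and> z \<le> 2"
  have "0 \<le> x \<and> x \<le> 8 \<and> 2 \<le> y \<and> y \<le> 3 \<and> 0 \<le> z \<and> z \<le> 1" using h assms(2) by (auto split: abs_split)
  then show ?thesis by blast
next
  assume h: "6 \<le> x \<and> x \<le> 8 \<and> 0 \<le> y \<and> y \<le> 4 \<and> 0 \<le> z \<and> z \<le> 1"
  have "6 \<le> x \<and> x \<le> 8 \<and> 0 \<le> y \<and> y \<le> 4 \<and> 0 \<le> z \<and> z \<le> 1" using h assms(2) by (auto split: abs_split)
  then show ?thesis by blast
qed

lemma stepa_H2a: fixes x y z :: real assumes "((0 \<le> x \<and> x \<le> 2 \<and> 0 \<le> y \<and> y \<le> 4 \<and> 0 \<le> z \<and> z \<le> 1) \<or> (2 \<le> x \<and> x \<le> 6 \<and> 0 \<le> y \<and> y \<le> 1 \<and> 0 \<le> z \<and> z \<le> 2) \<or> (2 \<le> x \<and> x \<le> 6 \<and> 2 \<le> y \<and> y \<le> 3 \<and> 0 \<le> z \<and> z \<le> 2) \<or> (6 \<le> x \<and> x \<le> 8 \<and> 0 \<le> y \<and> y \<le> 4 \<and> 0 \<le> z \<and> z \<le> 1))" and "(z - (1/2) > 0 \<and> 4 * (z - (1/2)) > \<bar>x - 4\<bar>)" shows "((2 \<le> x \<and> x \<le> 6 \<and> 0 \<le> y \<and> y \<le> 1 \<and> 0 \<le> z \<and> z \<le> 2) \<or>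 (2 \<le> x \<and> x \<le> 6 \<and> 2 \<le> y \<and> y \<le> 3 \<and> 0 \<le> z \<and> z \<le> 2))"
  using assms(1)
proof (elim disjE)
  assume h: "0 \<le> x \<and> x \<le> 2 \<and> 0 \<le> y \<and> y \<le> 4 \<and> 0 \<le> z \<and> z \<le> 1"
  then show ?thesis using h assms(2) by (auto split: abs_split)
next
  assume h: "2 \<le> x \<and> x \<le> 6 \<and> 0 \<le> y \<and> y \<le> 1 \<and> 0 \<le> z \<and> z \<le> 2"
  have "2 \<le> x \<and> x \<le> 6 \<and> 0 \<le> y \<and> y \<le> 1 \<and> 0 \<le> z \<and> z \<le> 2" using h assms(2) by (auto split: abs_split)
  then show ?thesis by blast
next
  assume h: "2 \<le> x \<and> x \<le> 6 \<and> 2 \<le> y \<and> y \<le> 3 \<and> 0 \<le> z \<and> z \<le> 2"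
  have "2 \<le> x \<and> x \<le> 6 \<and> 2 \<le> y \<and> y \<le> 3 \<and> 0 \<le> z \<and> z \<le> 2" using h assms(2) by (auto split: abs_split)
  then show ?thesis by blast
next
  assume h: "6 \<le> x \<and> x \<le> 8 \<and> 0 \<le> y \<and> y \<le> 4 \<and> 0 \<le> z \<and> z \<le> 1"
  then show ?thesis using h assms(2) by (auto split: abs_split)
qed

lemma stepa_H2b: fixes x y z :: real assumes "((2 \<le> x \<and> x \<le> 6 \<and> 0 \<le> y \<and> y \<le> 1 \<and> 0 \<le> z \<and> z \<le> 1) \<or> (2 \<le> x \<and> x \<le> 6 \<and> 2 \<le> y \<and> y \<le> 3 \<and> 0 \<le> z \<and> z \<le> 1))" shows "((0 \<le> x \<and> x \<le> 8 \<and> 0 \<le> y \<and> y \<le> 1 \<and> 0 \<le> z \<and> z \<le> 1) \<or> (0 \<le> x \<and> x \<le> 8 \<and> 2 \<le> y \<and> y \<le> 3 \<and> 0 \<le> z \<and> z \<le> 1) \<or> (0 \<le> x \<and> x \<le> 2 \<and> 0 \<le> y \<and> y \<le> 4 \<and> 0 \<le> z \<and> z \<le> 1) \<or> (6 \<le> x \<and> x \<le> 8 \<and> 0 \<le> y \<and> y \<le> 4 \<and> 0 \<le> z \<and> z \<le> 1))"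
  using assms(1)
proof (elim disjE)
  assume h: "2 \<le> x \<and> x \<le> 6 \<and> 0 \<le> y \<and> y \<le> 1 \<and> 0 \<le> z \<and> z \<le> 1"
  have "0 \<le> x \<and> x \<le> 8 \<and> 0 \<le> y \<and> y \<le> 1 \<and> 0 \<le> z \<and> z \<le> 1" using h  by (auto split: abs_split)
  then show ?thesis by blast
next
  assume h: "2 \<le> x \<and> x \<le> 6 \<and> 2 \<le> y \<and> y \<le> 3 \<and> 0 \<le> z \<and> z \<le> 1"
  have "0 \<le> x \<and> x \<le> 8 \<and> 2 \<le> y \<and> y \<le> 3 \<and> 0 \<le> z \<and> z \<le> 1" using h  by (auto split: abs_split)
  then show ?thesis by blast
qed

lemma stepa_H3: fixes x y z :: real assumes "((0 \<le> x \<and> x \<le> 8 \<and> 0 \<le> y \<and> y \<le> 1 \<and> 0 \<le> z \<and> z \<le> 1) \<or> (0 \<le> x \<and> x \<le> 8 \<and> 2 \<le> y \<and> y \<le> 3 \<and> 0 \<le> z \<and> z \<le> 1) \<or> (0 \<le> x \<and> x \<le> 2 \<and> 0 \<le> y \<and> y \<le> 4 \<and> 0 \<le> z \<and> z \<le> 1) \<or> (6 \<le> x \<and> x \<le> 8 \<and> 0 \<le> y \<and> y \<le> 4 \<and> 0 \<le> z \<and> z \<le> 1))" and "\<not> (z - (1/2) > 0 \<and> 4 * (z - (1/2)) > \<bar>x - 4\<bar>)" shows "((0 \<le> x \<and> x \<le> 2 \<and> 0 \<le> y \<and> y \<le> 4 \<and> 0 \<le> z \<and> z \<le> 1) \<or>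 (2 \<le> x \<and> x \<le> 6 \<and> 0 \<le> y \<and> y \<le> 1 \<and> 0 \<le> z \<and> z \<le> 2) \<or> (2 \<le> x \<and> x \<le> 6 \<and> 2 \<le> y \<and> y \<le> 3 \<and> 0 \<le> z \<and> z \<le> 2) \<or> (6 \<le> x \<and> x \<le> 8 \<and> 0 \<le> y \<and> y \<le> 4 \<and> 0 \<le> z \<and> z \<le> 1))"
  using assms(1)
proof (elim disjE)
  assume h: "0 \<le> x \<and> x \<le> 8 \<and> 0 \<le> y \<and> y \<le> 1 \<and> 0 \<le> z \<and> z \<le> 1"
  have "(0 \<le> x \<and> x \<le> 2 \<and> 0 \<le> y \<and> y \<le> 1 \<and> 0 \<le> z \<and> z \<le> 1) \<or> (2 \<le> x \<and> x \<le> 6 \<and> 0 \<le> y \<and> y \<le> 1 \<and> 0 \<le> z \<and> z \<le> 1) \<or> (6 \<le> x \<and> x \<le> 8 \<and> 0 \<le> y \<and> y \<le> 1 \<and> 0 \<le> z \<and> z \<le> 1)" using h by auto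
  then show ?thesis
  proof (elim disjE)
    assume h2: "0 \<le> x \<and> x \<le> 2 \<and> 0 \<le> y \<and> y \<le> 1 \<and> 0 \<le> z \<and> z \<le> 1"
    have "0 \<le> x \<and> x \<le> 2 \<and> 0 \<le> y \<and> y \<le> 4 \<and> 0 \<le> z \<and> z \<le> 1" using h2 h assms(2) by (auto split: abs_split)
    then show ?thesis by blast
  next
    assume h2: "2 \<le> x \<and> x \<le> 6 \<and> 0 \<le> y \<and> y \<le> 1 \<and> 0 \<le> z \<and> z \<le> 1"
    have "2 \<le> x \<and> x \<le> 6 \<and> 0 \<le> y \<and> y \<le> 1 \<and> 0 \<le> z \<and> z \<le> 2" using h2 h assms(2) by (auto split: abs_split)
    then show ?thesis by blast
  next
    assume h2: "6 \<le> x \<and> x \<le> 8 \<and> 0 \<le> y \<and> y \<le> 1 \<and> 0 \<le> z \<and> z \<le> 1"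
    have "6 \<le> x \<and> x \<le> 8 \<and> 0 \<le> y \<and> y \<le> 4 \<and> 0 \<le> z \<and> z \<le> 1" using h2 h assms(2) by (auto split: abs_split)
    then show ?thesis by blast
  qed
next
  assume h: "0 \<le> x \<and> x \<le> 8 \<and> 2 \<le> y \<and> y \<le> 3 \<and> 0 \<le> z \<and> z \<le> 1"
  have "(0 \<le> x \<and> x \<le> 2 \<and> 2 \<le> y \<and> y \<le> 3 \<and> 0 \<le> z \<and> z \<le> 1) \<or> (2 \<le> x \<and> x \<le> 6 \<and> 2 \<le> y \<and> y \<le> 3 \<and> 0 \<le> z \<and> z \<le> 1) \<or> (6 \<le> x \<and> x \<le> 8 \<and> 2 \<le> y \<and> y \<le> 3 \<and> 0 \<le> z \<and> z \<le> 1)" using h by auto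
  then show ?thesis
  proof (elim disjE)
    assume h2: "0 \<le> x \<and> x \<le> 2 \<and> 2 \<le> y \<and> y \<le> 3 \<and> 0 \<le> z \<and> z \<le> 1"
    have "0 \<le> x \<and> x \<le> 2 \<and> 0 \<le> y \<and> y \<le> 4 \<and> 0 \<le> z \<and> z \<le> 1" using h2 h assms(2) by (auto split: abs_split)
    then show ?thesis by blast
  next
    assume h2: "2 \<le> x \<and> x \<le> 6 \<and> 2 \<le> y \<and> y \<le> 3 \<and> 0 \<le> z \<and> z \<le> 1"
    have "2 \<le> x \<and> x \<le> 6 \<and> 2 \<le> y \<and> y \<le> 3 \<and> 0 \<le> z \<and> z \<le> 2" using h2 h assms(2) by (auto split: abs_split)
    then show ?thesis by blast
  next
    assume h2: "6 \<le> x \<and> x \<le> 8 \<and> 2 \<le> y \<and> y \<le> 3 \<and> 0 \<le> z \<and> z \<le> 1"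
    have "6 \<le> x \<and> x \<le> 8 \<and> 0 \<le> y \<and> y \<le> 4 \<and> 0 \<le> z \<and> z \<le> 1" using h2 h assms(2) by (auto split: abs_split)
    then show ?thesis by blast
  qed
next
  assume h: "0 \<le> x \<and> x \<le> 2 \<and> 0 \<le> y \<and> y \<le> 4 \<and> 0 \<le> z \<and> z \<le> 1"
  have "0 \<le> x \<and> x \<le> 2 \<and> 0 \<le> y \<and> y \<le> 4 \<and> 0 \<le> z \<and> z \<le> 1" using h assms(2) by (auto split: abs_split)
  then show ?thesis by blast
next
  assume h: "6 \<le> x \<and> x \<le> 8 \<and> 0 \<le> y \<and> y \<le> 4 \<and> 0 \<le> z \<and> z \<le> 1"
  have "6 \<le> x \<and> x \<le> 8 \<and> 0 \<le> y \<and> y \<le> 4 \<and> 0 \<le> z \<and> z \<le> 1" using h assms(2) by (auto split: abs_split)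
  then show ?thesis by blast
qed

lemma stepa_H4a: fixes x y z :: real assumes "((0 \<le> x \<and> x \<le> 8 \<and> 0 \<le> y \<and> y \<le> 1 \<and> 0 \<le> z \<and> z \<le> 1) \<or> (0 \<le> x \<and> x \<le> 8 \<and> 2 \<le> y \<and> y \<le> 3 \<and> 0 \<le> z \<and> z \<le> 1) \<or> (0 \<le> x \<and> x \<le> 2 \<and> 0 \<le> y \<and> y \<le> 4 \<and> 0 \<le> z \<and> z \<le> 1) \<or> (6 \<le> x \<and> x \<le> 8 \<and> 0 \<le> y \<and> y \<le> 4 \<and> 0 \<le> z \<and> z \<le> 1))" and "(z - (1/2) > 0 \<and> 4 * (z - (1/2)) > \<bar>x - 4\<bar>)" shows "((2 \<le> x \<and> x \<le> 6 \<and> 0 \<le> y \<and> y \<le> 1 \<and> 0 \<le> z \<and> z \<le> 1) \<or> (2 \<le> x \<and> x \<le> 6 \<and> 2 \<le> y \<and> y \<le> 3 \<and> 0 \<le> z \<and> z \<le> 1))"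
  using assms(1)
proof (elim disjE)
  assume h: "0 \<le> x \<and> x \<le> 8 \<and> 0 \<le> y \<and> y \<le> 1 \<and> 0 \<le> z \<and> z \<le> 1"
  have "2 \<le> x \<and> x \<le> 6 \<and> 0 \<le> y \<and> y \<le> 1 \<and> 0 \<le> z \<and> z \<le> 1" using h assms(2) by (auto split: abs_split)
  then show ?thesis by blast
next
  assume h: "0 \<le> x \<and> x \<le> 8 \<and> 2 \<le> y \<and> y \<le> 3 \<and> 0 \<le> z \<and> z \<le> 1"
  have "2 \<le> x \<and> x \<le> 6 \<and> 2 \<le> y \<and> y \<le> 3 \<and> 0 \<le> z \<and> z \<le> 1" using h assms(2) by (auto split: abs_split)
  then show ?thesis by blast
next
  assume h: "0 \<le> x \<and> x \<le> 2 \<and> 0 \<le> y \<and> y \<le> 4 \<and> 0 \<le> z \<and> z \<le> 1"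
  then show ?thesis using h assms(2) by (auto split: abs_split)
next
  assume h: "6 \<le> x \<and> x \<le> 8 \<and> 0 \<le> y \<and> y \<le> 4 \<and> 0 \<le> z \<and> z \<le> 1"
  then show ?thesis using h assms(2) by (auto split: abs_split)
qed

lemma stepa_H4b: fixes x y z :: real assumes "((2 \<le> x \<and> x \<le> 6 \<and> 0 \<le> y \<and> y \<le> 1 \<and> 0 \<le> z \<and> z \<le> 2) \<or> (2 \<le> x \<and> x \<le> 6 \<and> 2 \<le> y \<and> y \<le> 3 \<and> 0 \<le> z \<and> z \<le> 2))" shows "((0 \<le> x \<and> x \<le> 2 \<and> 0 \<le> y \<and> y \<le> 4 \<and> 0 \<le> z \<and> z \<le> 1) \<or> (2 \<le> x \<and> x \<le> 6 \<and> 0 \<le> y \<and> y \<le> 1 \<and> 0 \<le> z \<and> z \<le> 2) \<or> (2 \<le> x \<and> x \<le> 6 \<and> 2 \<le> y \<and> y \<le> 3 \<and> 0 \<le> z \<and> z \<le> 2) \<or> (6 \<le> x \<and> x \<le> 8 \<and> 0 \<le> y \<and> y \<le> 4 \<and> 0 \<le> z \<and> z \<le> 1))"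
  using assms(1)
proof (elim disjE)
  assume h: "2 \<le> x \<and> x \<le> 6 \<and> 0 \<le> y \<and> y \<le> 1 \<and> 0 \<le> z \<and> z \<le> 2"
  have "2 \<le> x \<and> x \<le> 6 \<and> 0 \<le> y \<and> y \<le> 1 \<and> 0 \<le> z \<and> z \<le> 2" using h  by (auto split: abs_split)
  then show ?thesis by blast
next
  assume h: "2 \<le> x \<and> x \<le> 6 \<and> 2 \<le> y \<and> y \<le> 3 \<and> 0 \<le> z \<and> z \<le> 2"
  have "2 \<le> x \<and> x \<le> 6 \<and> 2 \<le> y \<and> y \<le> 3 \<and> 0 \<le> z \<and> z \<le> 2" using h  by (auto split: abs_split)
  then show ?thesis by blast
qed

lemma stepa_G1: fixes x y z :: real shows "((2 \<le> x \<and> x \<le> 6 \<and> 0 \<le> y \<and> y \<le> 1 \<and> 0 \<le> z \<and> z \<le> 2) \<or> (2 \<le> x \<and> x \<le> 6 \<and> 2 \<le> y \<and> y \<le> 3 \<and> 0 \<le> z \<and> z \<le> 2)) \<Longrightarrow> ga1 (x - 4) (z - (1/2)) \<le> 1" by (auto simp: le_ga1)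

lemma stepa_G3: fixes x y z :: real shows "((2 \<le> x \<and> x \<le> 6 \<and> 0 \<le> y \<and> y \<le> 1 \<and> 0 \<le> z \<and> z \<le> 1) \<or> (2 \<le> x \<and> x \<le> 6 \<and> 2 \<le> y \<and> y \<le> 3 \<and> 0 \<le> z \<and> z \<le> 1)) \<Longrightarrow> ga2 (x - 4) (z - (1/2)) \<le> 1" by (auto simp: le_ga2)

lemma stepa_G2: fixes x y z u w :: real shows "ga2 (u - 4) (w - (1/2)) \<le> 1 \<Longrightarrow> ((2 \<le> x \<and> x \<le> 6 \<and> 0 \<le> y \<and> y \<le> 1 \<and> 0 \<le> z \<and> z \<le> 2) \<or> (2 \<le> x \<and> x \<le> 6 \<and> 2 \<le> y \<and> y \<le> 3 \<and> 0 \<le> z \<and> z \<le> 2)) \<Longrightarrow> ((2 \<le> u \<and> u \<le> 6 \<and> 0 \<le> y \<and> y \<le> 1 \<and> 0 \<le> w \<and> w \<le> 1) \<or> (2 \<le> u \<and> u \<le> 6 \<and> 2 \<le> y \<and> y \<le> 3 \<and> 0 \<le> w \<and> w \<le> 1))" by (auto simp: le_ga2)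

lemma stepa_G4: fixes x y z u w :: real shows "ga1 (u - 4) (w - (1/2)) \<le> 1 \<Longrightarrow> ((2 \<le> x \<and> x \<le> 6 \<and> 0 \<le> y \<and> y \<le> 1 \<and> 0 \<le> z \<and> z \<le> 1) \<or> (2 \<le> x \<and> x \<le> 6 \<and> 2 \<le> y \<and> y \<le> 3 \<and> 0 \<le> z \<and> z \<le> 1)) \<Longrightarrow> ((2 \<le> u \<and> u \<le> 6 \<and> 0 \<le> y \<and> y \<le> 1 \<and> 0 \<le> w \<and> w \<le> 2) \<or> (2 \<le> u \<and> u \<le> 6 \<and> 2 \<le> y \<and> y \<le> 3 \<and> 0 \<le> w \<and> w \<le> 2))" by (auto simp: le_ga1)

lemma stepa_img: "radF ga1 ga2 1 3 4 (1/2) ` (bx 0 0 0 2 4 1 \<union> bx 2 0 0 6 1 2 \<union> bx 2 2 0 6 3 2 \<union> bx 6 0 0 8 4 1) = bx 0 0 0 8 1 1 \<union> bx 0 2 0 8 3 1 \<union> bx 0 0 0 2 4 1 \<union> bx 6 0 0 8 4 1"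
proof (rule radF_image[OF gge_ga1 gge_ga2, of 1 3 2])
  fix p q :: "real^3"
  assume p: "p \<in> bx 0 0 0 2 4 1 \<union> bx 2 0 0 6 1 2 \<union> bx 2 2 0 6 3 2 \<union> bx 6 0 0 8 4 1"
  {
    assume "ga1 (p$1-4) (p$3-(1/2)) = ga2 (p$1-4) (p$3-(1/2))"
    then have "\<not> (p$3-(1/2) > 0 \<and> 4 * (p$3-(1/2)) > \<bar>p$1-4\<bar>)" using cone_ga by blast
    then show "p \<in> bx 0 0 0 8 1 1 \<union> bx 0 2 0 8 3 1 \<union> bx 0 0 0 2 4 1 \<union> bx 6 0 0 8 4 1"
      using p stepa_H1[where x="p$1" and z="p$3" and y="p$2"] by (simp add: mem_bx)
  }
  {
    assume ne: "ga1 (p$1-4) (p$3-(1/2)) \<noteq> ga2 (p$1-4) (p$3-(1/2))"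
      and qk: "q$2 = p$2" and tr: "ga2 (q$1-4) (q$3-(1/2)) = ga1 (p$1-4) (p$3-(1/2))"
    have c: "p$3-(1/2) > 0 \<and> 4 * (p$3-(1/2)) > \<bar>p$1-4\<bar>" using cone_ga ne by blast
    note r1 = stepa_H2a[where x="p$1" and z="p$3" and y="p$2", OF _ c]
    have r1': "((2 \<le> p$1 \<and> p$1 \<le> 6 \<and> 0 \<le> p$2 \<and> p$2 \<le> 1 \<and> 0 \<le> p$3 \<and> p$3 \<le> 2) \<or> (2 \<le> p$1 \<and> p$1 \<le> 6 \<and> 2 \<le> p$2 \<and> p$2 \<le> 3 \<and> 0 \<le> p$3 \<and> p$3 \<le> 2))" using r1 p by (simp add: mem_bx)
    have "ga1 (p$1-4) (p$3-(1/2)) \<le> 1" using stepa_G1[OF r1'] .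
    then have "ga2 (q$1-4) (q$3-(1/2)) \<le> 1" using tr by simp
    then have "((2 \<le> q$1 \<and> q$1 \<le> 6 \<and> 0 \<le> q$2 \<and> q$2 \<le> 1 \<and> 0 \<le> q$3 \<and> q$3 \<le> 1) \<or> (2 \<le> q$1 \<and> q$1 \<le> 6 \<and> 2 \<le> q$2 \<and> q$2 \<le> 3 \<and> 0 \<le> q$3 \<and> q$3 \<le> 1))" using stepa_G2[OF _ r1'] qk by simp
    then show "q \<in> bx 0 0 0 8 1 1 \<union> bx 0 2 0 8 3 1 \<union> bx 0 0 0 2 4 1 \<union> bx 6 0 0 8 4 1" using stepa_H2b[where x="q$1" and z="q$3" and y="q$2"] by (simp add: mem_bx)
  }
next
  fix p q :: "real^3"
  assume q: "q \<in> bx 0 0 0 8 1 1 \<union> bx 0 2 0 8 3 1 \<union> bx 0 0 0 2 4 1 \<union> bx 6 0 0 8 4 1"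
  {
    assume "ga2 (q$1-4) (q$3-(1/2)) = ga1 (q$1-4) (q$3-(1/2))"
    then have "\<not> (q$3-(1/2) > 0 \<and> 4 * (q$3-(1/2)) > \<bar>q$1-4\<bar>)" using cone_ga by metis
    then show "q \<in> bx 0 0 0 2 4 1 \<union> bx 2 0 0 6 1 2 \<union> bx 2 2 0 6 3 2 \<union> bx 6 0 0 8 4 1"
      using q stepa_H3[where x="q$1" and z="q$3" and y="q$2"] by (simp add: mem_bx)
  }
  {
    assume ne: "ga2 (q$1-4) (q$3-(1/2)) \<noteq> ga1 (q$1-4) (q$3-(1/2))"
      and pk: "p$2 = q$2" and tr: "ga1 (p$1-4) (p$3-(1/2)) = ga2 (q$1-4) (q$3-(1/2))"
    have c: "q$3-(1/2) > 0 \<and> 4 * (q$3-(1/2)) > \<bar>q$1-4\<bar>" using cone_ga ne by metis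
    note r2 = stepa_H4a[where x="q$1" and z="q$3" and y="q$2", OF _ c]
    have r2': "((2 \<le> q$1 \<and> q$1 \<le> 6 \<and> 0 \<le> q$2 \<and> q$2 \<le> 1 \<and> 0 \<le> q$3 \<and> q$3 \<le> 1) \<or> (2 \<le> q$1 \<and> q$1 \<le> 6 \<and> 2 \<le> q$2 \<and> q$2 \<le> 3 \<and> 0 \<le> q$3 \<and> q$3 \<le> 1))" using r2 q by (simp add: mem_bx)
    have "ga2 (q$1-4) (q$3-(1/2)) \<le> 1" using stepa_G3[OF r2'] .
    then have "ga1 (p$1-4) (p$3-(1/2)) \<le> 1" using tr by simp
    then have "((2 \<le> p$1 \<and> p$1 \<le> 6 \<and> 0 \<le> p$2 \<and> p$2 \<le> 1 \<and> 0 \<le> p$3 \<and> p$3 \<le> 2) \<or> (2 \<le> p$1 \<and> p$1 \<le> 6 \<and> 2 \<le> p$2 \<and> p$2 \<le> 3 \<and> 0 \<le> p$3 \<and> p$3 \<le> 2))" using stepa_G4[OF _ r2'] pk by simp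
    then show "p \<in> bx 0 0 0 2 4 1 \<union> bx 2 0 0 6 1 2 \<union> bx 2 2 0 6 3 2 \<union> bx 6 0 0 8 4 1" using stepa_H4b[where x="p$1" and z="p$3" and y="p$2"] by (simp add: mem_bx)
  }
qed simp_all


lemma stepb_H1: fixes x y z :: real assumes "((0 \<le> x \<and> x \<le> 8 \<and> 0 \<le> z \<and> z \<le> 1 \<and> 0 \<le> y \<and> y \<le> 1) \<or> (0 \<le> x \<and> x \<le> 8 \<and> 2 \<le> z \<and> z \<le> 3 \<and> 0 \<le> y \<and> y \<le> 1) \<or> (0 \<le> x \<and> x \<le> 2 \<and> 0 \<le> z \<and> z \<le> 4 \<and> 0 \<le> y \<and> y \<le> 1) \<or> (6 \<le> x \<and> x \<le> 8 \<and> 0 \<le> z \<and> z \<le> 4 \<and> 0 \<le> y \<and> y \<le> 1))" and "\<not> (z - (5/2) > 0 \<and> 2 * (z - (5/2)) > \<bar>x - 1\<bar>)" shows "((0 \<le> x \<and> x \<le> 8 \<and> 0 \<le> z \<and> z \<le> 1 \<and> 0 \<le> y \<and> y \<le> 1) \<or> (0 \<le> x \<and> x \<le> 8 \<and> 2 \<le> z \<and> z \<le> 3 \<and> 0 \<le> y \<and> y \<le> 1) \<or> (0 \<le> x \<and> x \<le> 2 \<and> 0 \<le> z \<and> z \<le> 3 \<and> 0 \<le> y \<and> y \<le> 1) \<or> (6 \<le> x \<and> x \<le> 8 \<and> 0 \<le> z \<and> z \<le> 4 \<and> 0 \<le> y \<and> y \<le> 1))"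
  using assms(1)
proof (elim disjE)
  assume h: "0 \<le> x \<and> x \<le> 8 \<and> 0 \<le> z \<and> z \<le> 1 \<and> 0 \<le> y \<and> y \<le> 1"
  have "0 \<le> x \<and> x \<le> 8 \<and> 0 \<le> z \<and> z \<le> 1 \<and> 0 \<le> y \<and> y \<le> 1" using h assms(2) by (auto split: abs_split)
  then show ?thesis by blast
next
  assume h: "0 \<le> x \<and> x \<le> 8 \<and> 2 \<le> z \<and> z \<le> 3 \<and> 0 \<le> y \<and> y \<le> 1"
  have "0 \<le> x \<and> x \<le> 8 \<and> 2 \<le> z \<and> z \<le> 3 \<and> 0 \<le> y \<and> y \<le> 1" using h assms(2) by (auto split: abs_split)
  then show ?thesis by blast
next
  assume h: "0 \<le> x \<and> x \<le> 2 \<and> 0 \<le> z \<and> z \<le> 4 \<and> 0 \<le> y \<and> y \<le> 1"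
  have "0 \<le> x \<and> x \<le> 2 \<and> 0 \<le> z \<and> z \<le> 3 \<and> 0 \<le> y \<and> y \<le> 1" using h assms(2) by (auto split: abs_split)
  then show ?thesis by blast
next
  assume h: "6 \<le> x \<and> x \<le> 8 \<and> 0 \<le> z \<and> z \<le> 4 \<and> 0 \<le> y \<and> y \<le> 1"
  have "6 \<le> x \<and> x \<le> 8 \<and> 0 \<le> z \<and> z \<le> 4 \<and> 0 \<le> y \<and> y \<le> 1" using h assms(2) by (auto split: abs_split)
  then show ?thesis by blast
qed

lemma stepb_H2a: fixes x y z :: real assumes "((0 \<le> x \<and> x \<le> 8 \<and> 0 \<le> z \<and> z \<le> 1 \<and> 0 \<le> y \<and> y \<le> 1) \<or> (0 \<le> x \<and> x \<le> 8 \<and> 2 \<le> z \<and> z \<le> 3 \<and> 0 \<le> y \<and> y \<le> 1) \<or> (0 \<le> x \<and> x \<le> 2 \<and> 0 \<le> z \<and> z \<le> 4 \<and> 0 \<le> y \<and> y \<le> 1) \<or> (6 \<le> x \<and> x \<le> 8 \<and> 0 \<le> z \<and> z \<le> 4 \<and> 0 \<le> y \<and> y \<le> 1))" and "(z - (5/2) > 0 \<and> 2 * (z - (5/2)) > \<bar>x - 1\<bar>)" shows "((0 \<le> x \<and> x \<le> 2 \<and> 2 \<le> z \<and> z \<le> 4 \<and> 0 \<le> y \<and> y \<le> 1))"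
  using assms(1)
proof (elim disjE)
  assume h: "0 \<le> x \<and> x \<le> 8 \<and> 0 \<le> z \<and> z \<le> 1 \<and> 0 \<le> y \<and> y \<le> 1"
  then show ?thesis using h assms(2) by (auto split: abs_split)
next
  assume h: "0 \<le> x \<and> x \<le> 8 \<and> 2 \<le> z \<and> z \<le> 3 \<and> 0 \<le> y \<and> y \<le> 1"
  have "0 \<le> x \<and> x \<le> 2 \<and> 2 \<le> z \<and> z \<le> 4 \<and> 0 \<le> y \<and> y \<le> 1" using h assms(2) by (auto split: abs_split)
  then show ?thesis by blast
next
  assume h: "0 \<le> x \<and> x \<le> 2 \<and> 0 \<le> z \<and> z \<le> 4 \<and> 0 \<le> y \<and> y \<le> 1"
  have "0 \<le> x \<and> x \<le> 2 \<and> 2 \<le> z \<and> z \<le> 4 \<and> 0 \<le> y \<and> y \<le> 1" using h assms(2) by (auto split: abs_split)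
  then show ?thesis by blast
next
  assume h: "6 \<le> x \<and> x \<le> 8 \<and> 0 \<le> z \<and> z \<le> 4 \<and> 0 \<le> y \<and> y \<le> 1"
  then show ?thesis using h assms(2) by (auto split: abs_split)
qed

lemma stepb_H2b: fixes x y z :: real assumes "((0 \<le> x \<and> x \<le> 2 \<and> 2 \<le> z \<and> z \<le> 3 \<and> 0 \<le> y \<and> y \<le> 1))" shows "((0 \<le> x \<and> x \<le> 8 \<and> 0 \<le> z \<and> z \<le> 1 \<and> 0 \<le> y \<and> y \<le> 1) \<or> (0 \<le> x \<and> x \<le> 8 \<and> 2 \<le> z \<and> z \<le> 3 \<and> 0 \<le> y \<and> y \<le> 1) \<or> (0 \<le> x \<and> x \<le> 2 \<and> 0 \<le> z \<and> z \<le> 3 \<and> 0 \<le> y \<and> y \<le> 1) \<or> (6 \<le> x \<and> x \<le> 8 \<and> 0 \<le> z \<and> z \<le> 4 \<and> 0 \<le> y \<and> y \<le> 1))"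
proof -
  note h = assms(1)
  have "0 \<le> x \<and> x \<le> 8 \<and> 2 \<le> z \<and> z \<le> 3 \<and> 0 \<le> y \<and> y \<le> 1" using h  by (auto split: abs_split)
  then show ?thesis by blast
qed

lemma stepb_H3: fixes x y z :: real assumes "((0 \<le> x \<and> x \<le> 8 \<and> 0 \<le> z \<and> z \<le> 1 \<and> 0 \<le> y \<and> y \<le> 1) \<or> (0 \<le> x \<and> x \<le> 8 \<and> 2 \<le> z \<and> z \<le> 3 \<and> 0 \<le> y \<and> y \<le> 1) \<or> (0 \<le> x \<and> x \<le> 2 \<and> 0 \<le> z \<and> z \<le> 3 \<and> 0 \<le> y \<and> y \<le> 1) \<or> (6 \<le> x \<and> x \<le> 8 \<and> 0 \<le> z \<and> z \<le> 4 \<and> 0 \<le> y \<and> y \<le> 1))" and "\<not> (z - (5/2) > 0 \<and> 2 * (z - (5/2)) > \<bar>x - 1\<bar>)" shows "((0 \<le> x \<and> x \<le> 8 \<and> 0 \<le> z \<and> z \<le> 1 \<and> 0 \<le> y \<and> y \<le> 1) \<or> (0 \<le> x \<and> x \<le> 8 \<and> 2 \<le> z \<and> z \<le> 3 \<and> 0 \<le> y \<and> y \<le> 1) \<or> (0 \<le> x \<and> x \<le> 2 \<and> 0 \<le> z \<and> z \<le> 4 \<and> 0 \<le> y \<and> y \<le> 1) \<or> (6 \<le> x \<and> x \<le> 8 \<and> 0 \<le> z \<and> z \<le> 4 \<and> 0 \<le> y \<and> y \<le> 1))"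
  using assms(1)
proof (elim disjE)
  assume h: "0 \<le> x \<and> x \<le> 8 \<and> 0 \<le> z \<and> z \<le> 1 \<and> 0 \<le> y \<and> y \<le> 1"
  have "0 \<le> x \<and> x \<le> 8 \<and> 0 \<le> z \<and> z \<le> 1 \<and> 0 \<le> y \<and> y \<le> 1" using h assms(2) by (auto split: abs_split)
  then show ?thesis by blast
next
  assume h: "0 \<le> x \<and> x \<le> 8 \<and> 2 \<le> z \<and> z \<le> 3 \<and> 0 \<le> y \<and> y \<le> 1"
  have "0 \<le> x \<and> x \<le> 8 \<and> 2 \<le> z \<and> z \<le> 3 \<and> 0 \<le> y \<and> y \<le> 1" using h assms(2) by (auto split: abs_split)
  then show ?thesis by blast
next
  assume h: "0 \<le> x \<and> x \<le> 2 \<and> 0 \<le> z \<and> z \<le> 3 \<and> 0 \<le> y \<and> y \<le> 1"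
  have "0 \<le> x \<and> x \<le> 2 \<and> 0 \<le> z \<and> z \<le> 4 \<and> 0 \<le> y \<and> y \<le> 1" using h assms(2) by (auto split: abs_split)
  then show ?thesis by blast
next
  assume h: "6 \<le> x \<and> x \<le> 8 \<and> 0 \<le> z \<and> z \<le> 4 \<and> 0 \<le> y \<and> y \<le> 1"
  have "6 \<le> x \<and> x \<le> 8 \<and> 0 \<le> z \<and> z \<le> 4 \<and> 0 \<le> y \<and> y \<le> 1" using h assms(2) by (auto split: abs_split)
  then show ?thesis by blast
qed

lemma stepb_H4a: fixes x y z :: real assumes "((0 \<le> x \<and> x \<le> 8 \<and> 0 \<le> z \<and> z \<le> 1 \<and> 0 \<le> y \<and> y \<le> 1) \<or> (0 \<le> x \<and> x \<le> 8 \<and> 2 \<le> z \<and> z \<le> 3 \<and> 0 \<le> y \<and> y \<le> 1) \<or> (0 \<le> x \<and> x \<le> 2 \<and> 0 \<le> z \<and> z \<le> 3 \<and> 0 \<le> y \<and> y \<le> 1) \<or> (6 \<le> x \<and> x \<le> 8 \<and> 0 \<le> z \<and> z \<le> 4 \<and> 0 \<le> y \<and> y \<le> 1))" and "(z - (5/2) > 0 \<and> 2 * (z - (5/2)) > \<bar>x - 1\<bar>)" shows "((0 \<le> x \<and> x \<le> 2 \<and> 2 \<le> z \<and> z \<le> 3 \<and> 0 \<le> y \<and> y \<le> 1))"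
  using assms(1)
proof (elim disjE)
  assume h: "0 \<le> x \<and> x \<le> 8 \<and> 0 \<le> z \<and> z \<le> 1 \<and> 0 \<le> y \<and> y \<le> 1"
  then show ?thesis using h assms(2) by (auto split: abs_split)
next
  assume h: "0 \<le> x \<and> x \<le> 8 \<and> 2 \<le> z \<and> z \<le> 3 \<and> 0 \<le> y \<and> y \<le> 1"
  have "0 \<le> x \<and> x \<le> 2 \<and> 2 \<le> z \<and> z \<le> 3 \<and> 0 \<le> y \<and> y \<le> 1" using h assms(2) by (auto split: abs_split)
  then show ?thesis by blast
next
  assume h: "0 \<le> x \<and> x \<le> 2 \<and> 0 \<le> z \<and> z \<le> 3 \<and> 0 \<le> y \<and> y \<le> 1"
  have "0 \<le> x \<and> x \<le> 2 \<and> 2 \<le> z \<and> z \<le> 3 \<and> 0 \<le> y \<and> y \<le> 1" using h assms(2) by (auto split: abs_split)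
  then show ?thesis by blast
next
  assume h: "6 \<le> x \<and> x \<le> 8 \<and> 0 \<le> z \<and> z \<le> 4 \<and> 0 \<le> y \<and> y \<le> 1"
  then show ?thesis using h assms(2) by (auto split: abs_split)
qed

lemma stepb_H4b: fixes x y z :: real assumes "((0 \<le> x \<and> x \<le> 2 \<and> 2 \<le> z \<and> z \<le> 4 \<and> 0 \<le> y \<and> y \<le> 1))" shows "((0 \<le> x \<and> x \<le> 8 \<and> 0 \<le> z \<and> z \<le> 1 \<and> 0 \<le> y \<and> y \<le> 1) \<or> (0 \<le> x \<and> x \<le> 8 \<and> 2 \<le> z \<and> z \<le> 3 \<and> 0 \<le> y \<and> y \<le> 1) \<or> (0 \<le> x \<and> x \<le> 2 \<and> 0 \<le> z \<and> z \<le> 4 \<and> 0 \<le> y \<and> y \<le> 1) \<or> (6 \<le> x \<and> x \<le> 8 \<and> 0 \<le> z \<and> z \<le> 4 \<and> 0 \<le> y \<and> y \<le> 1))"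
proof -
  note h = assms(1)
  have "0 \<le> x \<and> x \<le> 2 \<and> 0 \<le> z \<and> z \<le> 4 \<and> 0 \<le> y \<and> y \<le> 1" using h  by (auto split: abs_split)
  then show ?thesis by blast
qed

lemma stepb_G1: fixes x y z :: real shows "((0 \<le> x \<and> x \<le> 2 \<and> 2 \<le> z \<and> z \<le> 4 \<and> 0 \<le> y \<and> y \<le> 1)) \<Longrightarrow> gb1 (x - 1) (z - (5/2)) \<le> 1" by (auto simp: le_gb1)

lemma stepb_G3: fixes x y z :: real shows "((0 \<le> x \<and> x \<le> 2 \<and> 2 \<le> z \<and> z \<le> 3 \<and> 0 \<le> y \<and> y \<le> 1)) \<Longrightarrow> gb2 (x - 1) (z - (5/2)) \<le> 1" by (auto simp: le_gb2)

lemma stepb_G2: fixes x y z u w :: real shows "gb2 (u - 1) (w - (5/2)) \<le> 1 \<Longrightarrow> ((0 \<le> x \<and> x \<le> 2 \<and> 2 \<le> z \<and> z \<le> 4 \<and> 0 \<le> y \<and> y \<le> 1)) \<Longrightarrow> ((0 \<le> u \<and> u \<le> 2 \<and> 2 \<le> w \<and> w \<le> 3 \<and> 0 \<le> y \<and> y \<le> 1))" by (auto simp: le_gb2)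

lemma stepb_G4: fixes x y z u w :: real shows "gb1 (u - 1) (w - (5/2)) \<le> 1 \<Longrightarrow> ((0 \<le> x \<and> x \<le> 2 \<and> 2 \<le> z \<and> z \<le> 3 \<and> 0 \<le> y \<and> y \<le> 1)) \<Longrightarrow> ((0 \<le> u \<and> u \<le> 2 \<and> 2 \<le> w \<and> w \<le> 4 \<and> 0 \<le> y \<and> y \<le> 1))" by (auto simp: le_gb1)

lemma stepb_img: "radF gb1 gb2 1 2 1 (5/2) ` (bx 0 0 0 8 1 1 \<union> bx 0 2 0 8 3 1 \<union> bx 0 0 0 2 4 1 \<union> bx 6 0 0 8 4 1) = bx 0 0 0 8 1 1 \<union> bx 0 2 0 8 3 1 \<union> bx 0 0 0 2 3 1 \<union> bx 6 0 0 8 4 1"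
proof (rule radF_image[OF gge_gb1 gge_gb2, of 1 2 3])
  fix p q :: "real^3"
  assume p: "p \<in> bx 0 0 0 8 1 1 \<union> bx 0 2 0 8 3 1 \<union> bx 0 0 0 2 4 1 \<union> bx 6 0 0 8 4 1"
  {
    assume "gb1 (p$1-1) (p$2-(5/2)) = gb2 (p$1-1) (p$2-(5/2))"
    then have "\<not> (p$2-(5/2) > 0 \<and> 2 * (p$2-(5/2)) > \<bar>p$1-1\<bar>)" using cone_gb by blast
    then show "p \<in> bx 0 0 0 8 1 1 \<union> bx 0 2 0 8 3 1 \<union> bx 0 0 0 2 3 1 \<union> bx 6 0 0 8 4 1"
      using p stepb_H1[where x="p$1" and z="p$2" and y="p$3"] by (simp add: mem_bx)
  }
  {
    assume ne: "gb1 (p$1-1) (p$2-(5/2)) \<noteq> gb2 (p$1-1) (p$2-(5/2))"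
      and qk: "q$3 = p$3" and tr: "gb2 (q$1-1) (q$2-(5/2)) = gb1 (p$1-1) (p$2-(5/2))"
    have c: "p$2-(5/2) > 0 \<and> 2 * (p$2-(5/2)) > \<bar>p$1-1\<bar>" using cone_gb ne by blast
    note r1 = stepb_H2a[where x="p$1" and z="p$2" and y="p$3", OF _ c]
    have r1': "((0 \<le> p$1 \<and> p$1 \<le> 2 \<and> 2 \<le> p$2 \<and> p$2 \<le> 4 \<and> 0 \<le> p$3 \<and> p$3 \<le> 1))" using r1 p by (simp add: mem_bx)
    have "gb1 (p$1-1) (p$2-(5/2)) \<le> 1" using stepb_G1[OF r1'] .
    then have "gb2 (q$1-1) (q$2-(5/2)) \<le> 1" using tr by simp
    then have "((0 \<le> q$1 \<and> q$1 \<le> 2 \<and> 2 \<le> q$2 \<and> q$2 \<le> 3 \<and> 0 \<le> q$3 \<and> q$3 \<le> 1))" using stepb_G2[OF _ r1'] qk by simp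
    then show "q \<in> bx 0 0 0 8 1 1 \<union> bx 0 2 0 8 3 1 \<union> bx 0 0 0 2 3 1 \<union> bx 6 0 0 8 4 1" using stepb_H2b[where x="q$1" and z="q$2" and y="q$3"] by (simp add: mem_bx)
  }
next
  fix p q :: "real^3"
  assume q: "q \<in> bx 0 0 0 8 1 1 \<union> bx 0 2 0 8 3 1 \<union> bx 0 0 0 2 3 1 \<union> bx 6 0 0 8 4 1"
  {
    assume "gb2 (q$1-1) (q$2-(5/2)) = gb1 (q$1-1) (q$2-(5/2))"
    then have "\<not> (q$2-(5/2) > 0 \<and> 2 * (q$2-(5/2)) > \<bar>q$1-1\<bar>)" using cone_gb by metis
    then show "q \<in> bx 0 0 0 8 1 1 \<union> bx 0 2 0 8 3 1 \<union> bx 0 0 0 2 4 1 \<union> bx 6 0 0 8 4 1"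
      using q stepb_H3[where x="q$1" and z="q$2" and y="q$3"] by (simp add: mem_bx)
  }
  {
    assume ne: "gb2 (q$1-1) (q$2-(5/2)) \<noteq> gb1 (q$1-1) (q$2-(5/2))"
      and pk: "p$3 = q$3" and tr: "gb1 (p$1-1) (p$2-(5/2)) = gb2 (q$1-1) (q$2-(5/2))"
    have c: "q$2-(5/2) > 0 \<and> 2 * (q$2-(5/2)) > \<bar>q$1-1\<bar>" using cone_gb ne by metis
    note r2 = stepb_H4a[where x="q$1" and z="q$2" and y="q$3", OF _ c]
    have r2': "((0 \<le> q$1 \<and> q$1 \<le> 2 \<and> 2 \<le> q$2 \<and> q$2 \<le> 3 \<and> 0 \<le> q$3 \<and> q$3 \<le> 1))" using r2 q by (simp add: mem_bx)
    have "gb2 (q$1-1) (q$2-(5/2)) \<le> 1" using stepb_G3[OF r2'] .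
    then have "gb1 (p$1-1) (p$2-(5/2)) \<le> 1" using tr by simp
    then have "((0 \<le> p$1 \<and> p$1 \<le> 2 \<and> 2 \<le> p$2 \<and> p$2 \<le> 4 \<and> 0 \<le> p$3 \<and> p$3 \<le> 1))" using stepb_G4[OF _ r2'] pk by simp
    then show "p \<in> bx 0 0 0 8 1 1 \<union> bx 0 2 0 8 3 1 \<union> bx 0 0 0 2 4 1 \<union> bx 6 0 0 8 4 1" using stepb_H4b[where x="p$1" and z="p$2" and y="p$3"] by (simp add: mem_bx)
  }
qed simp_all


lemma stepc_H1: fixes x y z :: real assumes "((0 \<le> x \<and> x \<le> 8 \<and> 0 \<le> z \<and> z \<le> 1 \<and> 0 \<le> y \<and> y \<le> 1) \<or> (0 \<le> x \<and> x \<le> 8 \<and> 2 \<le> z \<and> z \<le> 3 \<and> 0 \<le> y \<and> y \<le> 1) \<or> (0 \<le> x \<and> x \<le> 2 \<and> 0 \<le> z \<and> z \<le> 3 \<and> 0 \<le> y \<and> y \<le> 1) \<or> (6 \<le> x \<and> x \<le> 8 \<and> 0 \<le> z \<and> z \<le> 4 \<and> 0 \<le> y \<and> y \<le> 1))" and "\<not> (z - (5/2) > 0 \<and> 2 * (z - (5/2)) > \<bar>x - 7\<bar>)" shows "((0 \<le> x \<and> x \<le> 8 \<and> 0 \<le> z \<and> z \<le> 1 \<and> 0 \<le> y \<and> y \<le> 1) \<or> (0 \<le> x \<and> x \<le> 8 \<and> 2 \<le> z \<and> z \<le> 3 \<and> 0 \<le> y \<and> y \<le> 1) \<or> (0 \<le>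 x \<and> x \<le> 2 \<and> 0 \<le> z \<and> z \<le> 3 \<and> 0 \<le> y \<and> y \<le> 1) \<or> (6 \<le> x \<and> x \<le> 8 \<and> 0 \<le> z \<and> z \<le> 3 \<and> 0 \<le> y \<and> y \<le> 1))"
  using assms(1)
proof (elim disjE)
  assume h: "0 \<le> x \<and> x \<le> 8 \<and> 0 \<le> z \<and> z \<le> 1 \<and> 0 \<le> y \<and> y \<le> 1"
  have "0 \<le> x \<and> x \<le> 8 \<and> 0 \<le> z \<and> z \<le> 1 \<and> 0 \<le> y \<and> y \<le> 1" using h assms(2) by (auto split: abs_split)
  then show ?thesis by blast
next
  assume h: "0 \<le> x \<and> x \<le> 8 \<and> 2 \<le> z \<and> z \<le> 3 \<and> 0 \<le> y \<and> y \<le> 1"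
  have "0 \<le> x \<and> x \<le> 8 \<and> 2 \<le> z \<and> z \<le> 3 \<and> 0 \<le> y \<and> y \<le> 1" using h assms(2) by (auto split: abs_split)
  then show ?thesis by blast
next
  assume h: "0 \<le> x \<and> x \<le> 2 \<and> 0 \<le> z \<and> z \<le> 3 \<and> 0 \<le> y \<and> y \<le> 1"
  have "0 \<le> x \<and> x \<le> 2 \<and> 0 \<le> z \<and> z \<le> 3 \<and> 0 \<le> y \<and> y \<le> 1" using h assms(2) by (auto split: abs_split)
  then show ?thesis by blast
next
  assume h: "6 \<le> x \<and> x \<le> 8 \<and> 0 \<le> z \<and> z \<le> 4 \<and> 0 \<le> y \<and> y \<le> 1"
  have "6 \<le> x \<and> x \<le> 8 \<and> 0 \<le> z \<and> z \<le> 3 \<and> 0 \<le> y \<and> y \<le> 1" using h assms(2) by (auto split: abs_split)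
  then show ?thesis by blast
qed

lemma stepc_H2a: fixes x y z :: real assumes "((0 \<le> x \<and> x \<le> 8 \<and> 0 \<le> z \<and> z \<le> 1 \<and> 0 \<le> y \<and> y \<le> 1) \<or> (0 \<le> x \<and> x \<le> 8 \<and> 2 \<le> z \<and> z \<le> 3 \<and> 0 \<le> y \<and> y \<le> 1) \<or> (0 \<le> x \<and> x \<le> 2 \<and> 0 \<le> z \<and> z \<le> 3 \<and> 0 \<le> y \<and> y \<le> 1) \<or> (6 \<le> x \<and> x \<le> 8 \<and> 0 \<le> z \<and> z \<le> 4 \<and> 0 \<le> y \<and> y \<le> 1))" and "(z - (5/2) > 0 \<and> 2 * (z - (5/2)) > \<bar>x - 7\<bar>)" shows "((6 \<le> x \<and> x \<le> 8 \<and> 2 \<le> z \<and> z \<le> 4 \<and> 0 \<le> y \<and> y \<le> 1))"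
  using assms(1)
proof (elim disjE)
  assume h: "0 \<le> x \<and> x \<le> 8 \<and> 0 \<le> z \<and> z \<le> 1 \<and> 0 \<le> y \<and> y \<le> 1"
  then show ?thesis using h assms(2) by (auto split: abs_split)
next
  assume h: "0 \<le> x \<and> x \<le> 8 \<and> 2 \<le> z \<and> z \<le> 3 \<and> 0 \<le> y \<and> y \<le> 1"
  have "6 \<le> x \<and> x \<le> 8 \<and> 2 \<le> z \<and> z \<le> 4 \<and> 0 \<le> y \<and> y \<le> 1" using h assms(2) by (auto split: abs_split)
  then show ?thesis by blast
next
  assume h: "0 \<le> x \<and> x \<le> 2 \<and> 0 \<le> z \<and> z \<le> 3 \<and> 0 \<le> y \<and> y \<le> 1"
  then show ?thesis using h assms(2) by (auto split: abs_split)
next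
  assume h: "6 \<le> x \<and> x \<le> 8 \<and> 0 \<le> z \<and> z \<le> 4 \<and> 0 \<le> y \<and> y \<le> 1"
  have "6 \<le> x \<and> x \<le> 8 \<and> 2 \<le> z \<and> z \<le> 4 \<and> 0 \<le> y \<and> y \<le> 1" using h assms(2) by (auto split: abs_split)
  then show ?thesis by blast
qed

lemma stepc_H2b: fixes x y z :: real assumes "((6 \<le> x \<and> x \<le> 8 \<and> 2 \<le> z \<and> z \<le> 3 \<and> 0 \<le> y \<and> y \<le> 1))" shows "((0 \<le> x \<and> x \<le> 8 \<and> 0 \<le> z \<and> z \<le> 1 \<and> 0 \<le> y \<and> y \<le> 1) \<or> (0 \<le> x \<and> x \<le> 8 \<and> 2 \<le> z \<and> z \<le> 3 \<and> 0 \<le> y \<and> y \<le> 1) \<or> (0 \<le> x \<and> x \<le> 2 \<and> 0 \<le> z \<and> z \<le> 3 \<and> 0 \<le> y \<and> y \<le> 1) \<or> (6 \<le> x \<and> x \<le> 8 \<and> 0 \<le> z \<and> z \<le> 3 \<and> 0 \<le> y \<and> y \<le> 1))"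
proof -
  note h = assms(1)
  have "0 \<le> x \<and> x \<le> 8 \<and> 2 \<le> z \<and> z \<le> 3 \<and> 0 \<le> y \<and> y \<le> 1" using h  by (auto split: abs_split)
  then show ?thesis by blast
qed

lemma stepc_H3: fixes x y z :: real assumes "((0 \<le> x \<and> x \<le> 8 \<and> 0 \<le> z \<and> z \<le> 1 \<and> 0 \<le> y \<and> y \<le> 1) \<or> (0 \<le> x \<and> x \<le> 8 \<and> 2 \<le> z \<and> z \<le> 3 \<and> 0 \<le> y \<and> y \<le> 1) \<or> (0 \<le> x \<and> x \<le> 2 \<and> 0 \<le> z \<and> z \<le> 3 \<and> 0 \<le> y \<and> y \<le> 1) \<or> (6 \<le> x \<and> x \<le> 8 \<and> 0 \<le> z \<and> z \<le> 3 \<and> 0 \<le> y \<and> y \<le> 1))" and "\<not> (z - (5/2) > 0 \<and> 2 * (z - (5/2)) > \<bar>x - 7\<bar>)" shows "((0 \<le> x \<and> x \<le> 8 \<and> 0 \<le> z \<and> z \<le> 1 \<and> 0 \<le> y \<and> y \<le> 1) \<or> (0 \<le> x \<and> x \<le> 8 \<and> 2 \<le> z \<and> z \<le> 3 \<and> 0 \<le> y \<and> y \<le> 1) \<or> (0 \<le> x \<and> x \<le> 2 \<and> 0 \<le> z \<and> z \<le> 3 \<and> 0 \<le> y \<and> y \<le> 1) \<or> (6 \<le> x \<and> x \<le> 8 \<and> 0 \<le> z \<and> z \<le> 4 \<and> 0 \<le> y \<and> y \<le> 1))"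
  using assms(1)
proof (elim disjE)
  assume h: "0 \<le> x \<and> x \<le> 8 \<and> 0 \<le> z \<and> z \<le> 1 \<and> 0 \<le> y \<and> y \<le> 1"
  have "0 \<le> x \<and> x \<le> 8 \<and> 0 \<le> z \<and> z \<le> 1 \<and> 0 \<le> y \<and> y \<le> 1" using h assms(2) by (auto split: abs_split)
  then show ?thesis by blast
next
  assume h: "0 \<le> x \<and> x \<le> 8 \<and> 2 \<le> z \<and> z \<le> 3 \<and> 0 \<le> y \<and> y \<le> 1"
  have "0 \<le> x \<and> x \<le> 8 \<and> 2 \<le> z \<and> z \<le> 3 \<and> 0 \<le> y \<and> y \<le> 1" using h assms(2) by (auto split: abs_split)
  then show ?thesis by blast
next
  assume h: "0 \<le> x \<and> x \<le> 2 \<and> 0 \<le> z \<and> z \<le> 3 \<and> 0 \<le> y \<and> y \<le> 1"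
  have "0 \<le> x \<and> x \<le> 2 \<and> 0 \<le> z \<and> z \<le> 3 \<and> 0 \<le> y \<and> y \<le> 1" using h assms(2) by (auto split: abs_split)
  then show ?thesis by blast
next
  assume h: "6 \<le> x \<and> x \<le> 8 \<and> 0 \<le> z \<and> z \<le> 3 \<and> 0 \<le> y \<and> y \<le> 1"
  have "6 \<le> x \<and> x \<le> 8 \<and> 0 \<le> z \<and> z \<le> 4 \<and> 0 \<le> y \<and> y \<le> 1" using h assms(2) by (auto split: abs_split)
  then show ?thesis by blast
qed

lemma stepc_H4a: fixes x y z :: real assumes "((0 \<le> x \<and> x \<le> 8 \<and> 0 \<le> z \<and> z \<le> 1 \<and> 0 \<le> y \<and> y \<le> 1) \<or> (0 \<le> x \<and> x \<le> 8 \<and> 2 \<le> z \<and> z \<le> 3 \<and> 0 \<le> y \<and> y \<le> 1) \<or> (0 \<le> x \<and> x \<le> 2 \<and> 0 \<le> z \<and> z \<le> 3 \<and> 0 \<le> y \<and> y \<le> 1) \<or> (6 \<le> x \<and> x \<le> 8 \<and> 0 \<le> z \<and> z \<le> 3 \<and> 0 \<le> y \<and> y \<le> 1))" and "(z - (5/2) > 0 \<and> 2 * (z - (5/2)) > \<bar>x - 7\<bar>)" shows "((6 \<le> x \<and> x \<le> 8 \<and> 2 \<le> z \<and> z \<le> 3 \<and> 0 \<le> y \<and> y \<le> 1))"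
  using assms(1)
proof (elim disjE)
  assume h: "0 \<le> x \<and> x \<le> 8 \<and> 0 \<le> z \<and> z \<le> 1 \<and> 0 \<le> y \<and> y \<le> 1"
  then show ?thesis using h assms(2) by (auto split: abs_split)
next
  assume h: "0 \<le> x \<and> x \<le> 8 \<and> 2 \<le> z \<and> z \<le> 3 \<and> 0 \<le> y \<and> y \<le> 1"
  have "6 \<le> x \<and> x \<le> 8 \<and> 2 \<le> z \<and> z \<le> 3 \<and> 0 \<le> y \<and> y \<le> 1" using h assms(2) by (auto split: abs_split)
  then show ?thesis by blast
next
  assume h: "0 \<le> x \<and> x \<le> 2 \<and> 0 \<le> z \<and> z \<le> 3 \<and> 0 \<le> y \<and> y \<le> 1"
  then show ?thesis using h assms(2) by (auto split: abs_split)
next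
  assume h: "6 \<le> x \<and> x \<le> 8 \<and> 0 \<le> z \<and> z \<le> 3 \<and> 0 \<le> y \<and> y \<le> 1"
  have "6 \<le> x \<and> x \<le> 8 \<and> 2 \<le> z \<and> z \<le> 3 \<and> 0 \<le> y \<and> y \<le> 1" using h assms(2) by (auto split: abs_split)
  then show ?thesis by blast
qed

lemma stepc_H4b: fixes x y z :: real assumes "((6 \<le> x \<and> x \<le> 8 \<and> 2 \<le> z \<and> z \<le> 4 \<and> 0 \<le> y \<and> y \<le> 1))" shows "((0 \<le> x \<and> x \<le> 8 \<and> 0 \<le> z \<and> z \<le> 1 \<and> 0 \<le> y \<and> y \<le> 1) \<or> (0 \<le> x \<and> x \<le> 8 \<and> 2 \<le> z \<and> z \<le> 3 \<and> 0 \<le> y \<and> y \<le> 1) \<or> (0 \<le> x \<and> x \<le> 2 \<and> 0 \<le> z \<and> z \<le> 3 \<and> 0 \<le> y \<and> y \<le> 1) \<or> (6 \<le> x \<and> x \<le> 8 \<and> 0 \<le> z \<and> z \<le> 4 \<and> 0 \<le> y \<and> y \<le> 1))"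
proof -
  note h = assms(1)
  have "6 \<le> x \<and> x \<le> 8 \<and> 0 \<le> z \<and> z \<le> 4 \<and> 0 \<le> y \<and> y \<le> 1" using h  by (auto split: abs_split)
  then show ?thesis by blast
qed

lemma stepc_G1: fixes x y z :: real shows "((6 \<le> x \<and> x \<le> 8 \<and> 2 \<le> z \<and> z \<le> 4 \<and> 0 \<le> y \<and> y \<le> 1)) \<Longrightarrow> gb1 (x - 7) (z - (5/2)) \<le> 1" by (auto simp: le_gb1)

lemma stepc_G3: fixes x y z :: real shows "((6 \<le> x \<and> x \<le> 8 \<and> 2 \<le> z \<and> z \<le> 3 \<and> 0 \<le> y \<and> y \<le> 1)) \<Longrightarrow> gb2 (x - 7) (z - (5/2)) \<le> 1" by (auto simp: le_gb2)

lemma stepc_G2: fixes x y z u w :: real shows "gb2 (u - 7) (w - (5/2)) \<le> 1 \<Longrightarrow> ((6 \<le> x \<and> x \<le> 8 \<and> 2 \<le> z \<and> z \<le> 4 \<and> 0 \<le> y \<and> y \<le> 1)) \<Longrightarrow> ((6 \<le> u \<and> u \<le> 8 \<and> 2 \<le> w \<and> w \<le> 3 \<and> 0 \<le> y \<and> y \<le> 1))" by (auto simp: le_gb2)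

lemma stepc_G4: fixes x y z u w :: real shows "gb1 (u - 7) (w - (5/2)) \<le> 1 \<Longrightarrow> ((6 \<le> x \<and> x \<le> 8 \<and> 2 \<le> z \<and> z \<le> 3 \<and> 0 \<le> y \<and> y \<le> 1)) \<Longrightarrow> ((6 \<le> u \<and> u \<le> 8 \<and> 2 \<le> w \<and> w \<le> 4 \<and> 0 \<le> y \<and> y \<le> 1))" by (auto simp: le_gb1)

lemma stepc_img: "radF gb1 gb2 1 2 7 (5/2) ` (bx 0 0 0 8 1 1 \<union> bx 0 2 0 8 3 1 \<union> bx 0 0 0 2 3 1 \<union> bx 6 0 0 8 4 1) = bx 0 0 0 8 1 1 \<union> bx 0 2 0 8 3 1 \<union> bx 0 0 0 2 3 1 \<union> bx 6 0 0 8 3 1"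
proof (rule radF_image[OF gge_gb1 gge_gb2, of 1 2 3])
  fix p q :: "real^3"
  assume p: "p \<in> bx 0 0 0 8 1 1 \<union> bx 0 2 0 8 3 1 \<union> bx 0 0 0 2 3 1 \<union> bx 6 0 0 8 4 1"
  {
    assume "gb1 (p$1-7) (p$2-(5/2)) = gb2 (p$1-7) (p$2-(5/2))"
    then have "\<not> (p$2-(5/2) > 0 \<and> 2 * (p$2-(5/2)) > \<bar>p$1-7\<bar>)" using cone_gb by blast
    then show "p \<in> bx 0 0 0 8 1 1 \<union> bx 0 2 0 8 3 1 \<union> bx 0 0 0 2 3 1 \<union> bx 6 0 0 8 3 1"
      using p stepc_H1[where x="p$1" and z="p$2" and y="p$3"] by (simp add: mem_bx)
  }
  {
    assume ne: "gb1 (p$1-7) (p$2-(5/2)) \<noteq> gb2 (p$1-7) (p$2-(5/2))"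
      and qk: "q$3 = p$3" and tr: "gb2 (q$1-7) (q$2-(5/2)) = gb1 (p$1-7) (p$2-(5/2))"
    have c: "p$2-(5/2) > 0 \<and> 2 * (p$2-(5/2)) > \<bar>p$1-7\<bar>" using cone_gb ne by blast
    note r1 = stepc_H2a[where x="p$1" and z="p$2" and y="p$3", OF _ c]
    have r1': "((6 \<le> p$1 \<and> p$1 \<le> 8 \<and> 2 \<le> p$2 \<and> p$2 \<le> 4 \<and> 0 \<le> p$3 \<and> p$3 \<le> 1))" using r1 p by (simp add: mem_bx)
    have "gb1 (p$1-7) (p$2-(5/2)) \<le> 1" using stepc_G1[OF r1'] .
    then have "gb2 (q$1-7) (q$2-(5/2)) \<le> 1" using tr by simp
    then have "((6 \<le> q$1 \<and> q$1 \<le> 8 \<and> 2 \<le> q$2 \<and> q$2 \<le> 3 \<and> 0 \<le> q$3 \<and> q$3 \<le> 1))" using stepc_G2[OF _ r1'] qk by simp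
    then show "q \<in> bx 0 0 0 8 1 1 \<union> bx 0 2 0 8 3 1 \<union> bx 0 0 0 2 3 1 \<union> bx 6 0 0 8 3 1" using stepc_H2b[where x="q$1" and z="q$2" and y="q$3"] by (simp add: mem_bx)
  }
next
  fix p q :: "real^3"
  assume q: "q \<in> bx 0 0 0 8 1 1 \<union> bx 0 2 0 8 3 1 \<union> bx 0 0 0 2 3 1 \<union> bx 6 0 0 8 3 1"
  {
    assume "gb2 (q$1-7) (q$2-(5/2)) = gb1 (q$1-7) (q$2-(5/2))"
    then have "\<not> (q$2-(5/2) > 0 \<and> 2 * (q$2-(5/2)) > \<bar>q$1-7\<bar>)" using cone_gb by metis
    then show "q \<in> bx 0 0 0 8 1 1 \<union> bx 0 2 0 8 3 1 \<union> bx 0 0 0 2 3 1 \<union> bx 6 0 0 8 4 1"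
      using q stepc_H3[where x="q$1" and z="q$2" and y="q$3"] by (simp add: mem_bx)
  }
  {
    assume ne: "gb2 (q$1-7) (q$2-(5/2)) \<noteq> gb1 (q$1-7) (q$2-(5/2))"
      and pk: "p$3 = q$3" and tr: "gb1 (p$1-7) (p$2-(5/2)) = gb2 (q$1-7) (q$2-(5/2))"
    have c: "q$2-(5/2) > 0 \<and> 2 * (q$2-(5/2)) > \<bar>q$1-7\<bar>" using cone_gb ne by metis
    note r2 = stepc_H4a[where x="q$1" and z="q$2" and y="q$3", OF _ c]
    have r2': "((6 \<le> q$1 \<and> q$1 \<le> 8 \<and> 2 \<le> q$2 \<and> q$2 \<le> 3 \<and> 0 \<le> q$3 \<and> q$3 \<le> 1))" using r2 q by (simp add: mem_bx)
    have "gb2 (q$1-7) (q$2-(5/2)) \<le> 1" using stepc_G3[OF r2'] .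
    then have "gb1 (p$1-7) (p$2-(5/2)) \<le> 1" using tr by simp
    then have "((6 \<le> p$1 \<and> p$1 \<le> 8 \<and> 2 \<le> p$2 \<and> p$2 \<le> 4 \<and> 0 \<le> p$3 \<and> p$3 \<le> 1))" using stepc_G4[OF _ r2'] pk by simp
    then show "p \<in> bx 0 0 0 8 1 1 \<union> bx 0 2 0 8 3 1 \<union> bx 0 0 0 2 3 1 \<union> bx 6 0 0 8 4 1" using stepc_H4b[where x="p$1" and z="p$2" and y="p$3"] by (simp add: mem_bx)
  }
qed simp_all



definition ym :: "real \<Rightarrow> real" where "ym y = max ((y+1)/2) (min y ((y+2)/2))"
definition ymi :: "real \<Rightarrow> real" where "ymi w = min (2*w-1) (max w (2*w-2))"

lemma ym_inv: "ymi (ym y) = y" "ym (ymi y) = y"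
  by (auto simp: ym_def ymi_def max_def min_def field_simps)

definition yF :: "real^3 \<Rightarrow> real^3" where "yF p = p + (ym (p$2) - p$2) *\<^sub>R axis 2 1"
definition yG :: "real^3 \<Rightarrow> real^3" where "yG p = p + (ymi (p$2) - p$2) *\<^sub>R axis 2 1"

lemma yF_comp: "yF p $ 1 = p $ 1" "yF p $ 2 = ym (p$2)" "yF p $ 3 = p $ 3"
  by (auto simp: yF_def axis_def)
lemma yG_comp: "yG p $ 1 = p $ 1" "yG p $ 2 = ymi (p$2)" "yG p $ 3 = p $ 3"
  by (auto simp: yG_def axis_def)

lemma vec3_eqI: "x$1 = y$1 \<Longrightarrow> x$2 = y$2 \<Longrightarrow> x$3 = (y::real^3)$3 \<Longrightarrow> x = y"
  by (simp add: vec_eq_iff forall_3)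

lemma yFG_homeo: "homeomorphism UNIV UNIV yF yG"
proof (rule homeomorphismI)
  show "continuous_on UNIV yF" unfolding yF_def ym_def by (auto intro!: continuous_intros)
  show "continuous_on UNIV yG" unfolding yG_def ymi_def by (auto intro!: continuous_intros)
  show "yG (yF x) = x" for x by (rule vec3_eqI) (simp_all add: yF_comp yG_comp ym_inv)
  show "yF (yG x) = x" for x by (rule vec3_eqI) (simp_all add: yF_comp yG_comp ym_inv)
qed auto

definition Mset :: "(real^3) set" where
  "Mset = {p. 1 \<le> ga2 (p$1-4) (p$2-3/2) \<and> ga2 (p$1-4) (p$2-3/2) \<le> 2 \<and> 0 \<le> p$3 \<and> p$3 \<le> 1}"

lemma ge1_ga2: "1 \<le> ga2 a b \<longleftrightarrow> (a \<le> -2 \<or> 2 \<le> a \<or> b \<le> -1/2 \<or> 1/2 \<le> b)"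
  unfolding ga2_def by (auto simp: max_def split: abs_split)
lemma le2_ga2: "ga2 a b \<le> 2 \<longleftrightarrow> -4 \<le> a \<and> a \<le> 4 \<and> -1 \<le> b \<and> b \<le> 1"
  unfolding ga2_def by (auto split: abs_split)

lemma ym_1: "y \<le> 1 \<Longrightarrow> ym y = (y+1)/2" by (auto simp: ym_def max_def min_def)
lemma ym_2: "2 \<le> y \<Longrightarrow> ym y = (y+2)/2" by (auto simp: ym_def max_def min_def)
lemma ym_r: "0 \<le> y \<Longrightarrow> y \<le> 3 \<Longrightarrow> 1/2 \<le> ym y \<and> ym y \<le> 5/2" by (auto simp: ym_def max_def min_def)
lemma ymi_1: "w \<le> 1 \<Longrightarrow> ymi w = 2*w-1" by (auto simp: ymi_def max_def min_def)
lemma ymi_2: "2 \<le> w \<Longrightarrow> ymi w = 2*w-2" by (auto simp: ymi_def max_def min_def)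
lemma ymi_r: "1/2 \<le> w \<Longrightarrow> w \<le> 5/2 \<Longrightarrow> 0 \<le> ymi w \<and> ymi w \<le> 3" by (auto simp: ymi_def max_def min_def)

lemma stepd_L1:
  fixes x y z :: real
  assumes "(0 \<le> x \<and> x \<le> 8 \<and> 0 \<le> y \<and> y \<le> 1 \<and> 0 \<le> z \<and> z \<le> 1) \<or> (0 \<le> x \<and> x \<le> 8 \<and> 2 \<le> y \<and> y \<le> 3 \<and> 0 \<le> z \<and> z \<le> 1) \<or>
     (0 \<le> x \<and> x \<le> 2 \<and> 0 \<le> y \<and> y \<le> 3 \<and> 0 \<le> z \<and> z \<le> 1) \<or> (6 \<le> x \<and> x \<le> 8 \<and> 0 \<le> y \<and> y \<le> 3 \<and> 0 \<le> z \<and> z \<le> 1)"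
  shows "1 \<le> ga2 (x-4) (ym y-3/2) \<and> ga2 (x-4) (ym y-3/2) \<le> 2 \<and> 0 \<le> z \<and> z \<le> 1"
  using assms
proof (elim disjE)
  assume h: "0 \<le> x \<and> x \<le> 8 \<and> 0 \<le> y \<and> y \<le> 1 \<and> 0 \<le> z \<and> z \<le> 1"
  then show ?thesis by (simp add: ge1_ga2 le2_ga2 ym_1 field_simps)
next
  assume h: "0 \<le> x \<and> x \<le> 8 \<and> 2 \<le> y \<and> y \<le> 3 \<and> 0 \<le> z \<and> z \<le> 1"
  then show ?thesis by (simp add: ge1_ga2 le2_ga2 ym_2 field_simps)
next
  assume h: "0 \<le> x \<and> x \<le> 2 \<and> 0 \<le> y \<and> y \<le> 3 \<and> 0 \<le> z \<and> z \<le> 1"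
  then show ?thesis using ym_r[of y] by (simp add: ge1_ga2 le2_ga2 field_simps)
next
  assume h: "6 \<le> x \<and> x \<le> 8 \<and> 0 \<le> y \<and> y \<le> 3 \<and> 0 \<le> z \<and> z \<le> 1"
  then show ?thesis using ym_r[of y] by (simp add: ge1_ga2 le2_ga2 field_simps)
qed

lemma stepd_L2:
  fixes x w z :: real
  assumes "1 \<le> ga2 (x-4) (w-3/2)" "ga2 (x-4) (w-3/2) \<le> 2" "0 \<le> z" "z \<le> 1"
  shows "(0 \<le> x \<and> x \<le> 8 \<and> 0 \<le> ymi w \<and> ymi w \<le> 1 \<and> 0 \<le> z \<and> z \<le> 1) \<or> (0 \<le> x \<and> x \<le> 8 \<and> 2 \<le> ymi w \<and> ymi w \<le> 3 \<and> 0 \<le> z \<and> z \<le> 1) \<or>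
     (0 \<le> x \<and> x \<le> 2 \<and> 0 \<le> ymi w \<and> ymi w \<le> 3 \<and> 0 \<le> z \<and> z \<le> 1) \<or> (6 \<le> x \<and> x \<le> 8 \<and> 0 \<le> ymi w \<and> ymi w \<le> 3 \<and> 0 \<le> z \<and> z \<le> 1)"
proof -
  have a: "-4 \<le> x-4 \<and> x-4 \<le> 4 \<and> -1 \<le> w-3/2 \<and> w-3/2 \<le> 1" using assms(2) le2_ga2 by blast
  have b: "x-4 \<le> -2 \<or> 2 \<le> x-4 \<or> w-3/2 \<le> -1/2 \<or> 1/2 \<le> w-3/2" using assms(1) ge1_ga2 by blast
  have r: "0 \<le> ymi w \<and> ymi w \<le> 3" using ymi_r a by simp
  from b show ?thesis
  proof (elim disjE)
    assume "x-4 \<le> -2" then show ?thesis using a r assms by simp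
  next
    assume "2 \<le> x-4" then show ?thesis using a r assms by simp
  next
    assume "w-3/2 \<le> -1/2" then show ?thesis using a r assms ymi_1[of w] by simp
  next
    assume "1/2 \<le> w-3/2" then show ?thesis using a r assms ymi_2[of w] by simp
  qed
qed

lemma stepd_img: "yF ` (bx 0 0 0 8 1 1 \<union> bx 0 2 0 8 3 1 \<union> bx 0 0 0 2 3 1 \<union> bx 6 0 0 8 3 1) = Mset"
proof
  show "yF ` (bx 0 0 0 8 1 1 \<union> bx 0 2 0 8 3 1 \<union> bx 0 0 0 2 3 1 \<union> bx 6 0 0 8 3 1) \<subseteq> Mset"
  proof clarify
    fix p assume "p \<in> bx 0 0 0 8 1 1 \<union> bx 0 2 0 8 3 1 \<union> bx 0 0 0 2 3 1 \<union> bx 6 0 0 8 3 1"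
    then have "(0 \<le> p$1 \<and> p$1 \<le> 8 \<and> 0 \<le> p$2 \<and> p$2 \<le> 1 \<and> 0 \<le> p$3 \<and> p$3 \<le> 1) \<or> (0 \<le> p$1 \<and> p$1 \<le> 8 \<and> 2 \<le> p$2 \<and> p$2 \<le> 3 \<and> 0 \<le> p$3 \<and> p$3 \<le> 1) \<or>
     (0 \<le> p$1 \<and> p$1 \<le> 2 \<and> 0 \<le> p$2 \<and> p$2 \<le> 3 \<and> 0 \<le> p$3 \<and> p$3 \<le> 1) \<or> (6 \<le> p$1 \<and> p$1 \<le> 8 \<and> 0 \<le> p$2 \<and> p$2 \<le> 3 \<and> 0 \<le> p$3 \<and> p$3 \<le> 1)"
      by (simp add: mem_bx)
    from stepd_L1[OF this] show "yF p \<in> Mset" by (simp add: Mset_def yF_comp)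
  qed
next
  show "Mset \<subseteq> yF ` (bx 0 0 0 8 1 1 \<union> bx 0 2 0 8 3 1 \<union> bx 0 0 0 2 3 1 \<union> bx 6 0 0 8 3 1)"
  proof
    fix q assume "q \<in> Mset"
    then have q: "1 \<le> ga2 (q$1-4) (q$2-3/2)" "ga2 (q$1-4) (q$2-3/2) \<le> 2" "0 \<le> q$3" "q$3 \<le> 1"
      by (auto simp: Mset_def)
    have "yG q \<in> bx 0 0 0 8 1 1 \<union> bx 0 2 0 8 3 1 \<union> bx 0 0 0 2 3 1 \<union> bx 6 0 0 8 3 1"
      using stepd_L2[OF q] by (simp add: mem_bx yG_comp)
    moreover have "yF (yG q) = q" using yFG_homeo by (simp add: homeomorphism_def)
    ultimately show "q \<in> yF ` (bx 0 0 0 8 1 1 \<union> bx 0 2 0 8 3 1 \<union> bx 0 0 0 2 3 1 \<union> bx 6 0 0 8 3 1)"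
      by (metis image_eqI)
  qed
qed


definition v2 :: "real \<Rightarrow> real \<Rightarrow> real^2" where "v2 a b = a *\<^sub>R axis 1 1 + b *\<^sub>R axis 2 1"
definition v3 :: "real \<Rightarrow> real \<Rightarrow> real \<Rightarrow> real^3" where "v3 a b c = a *\<^sub>R axis 1 1 + b *\<^sub>R axis 2 1 + c *\<^sub>R axis 3 1"

lemma v2_comp [simp]: "v2 a b $ 1 = a" "v2 a b $ 2 = b" by (auto simp: v2_def axis_def)
lemma v3_comp [simp]: "v3 a b c $ 1 = a" "v3 a b c $ 2 = b" "v3 a b c $ 3 = c" by (auto simp: v3_def axis_def)
lemma vec2_eqI: "x$1 = y$1 \<Longrightarrow> x$2 = (y::real^2)$2 \<Longrightarrow> x = y"
  by (simp add: vec_eq_iff forall_2)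
lemma v2_zero: "v2 a b = 0 \<longleftrightarrow> a = 0 \<and> b = 0"
  by (metis v2_comp vec2_eqI zero_index)

definition hf :: "real^3 \<Rightarrow> ((real^2) \<times> (real^2))" where
  "hf p = (v2 (ga2 (p$1-4) (p$2-3/2)) (p$3), (1 / norm (v2 (p$1-4) (p$2-3/2))) *\<^sub>R v2 (p$1-4) (p$2-3/2))"
definition hg :: "((real^2) \<times> (real^2)) \<Rightarrow> real^3" where
  "hg wu = v3 (4 + (fst wu)$1 * (snd wu)$1 / ga2 ((snd wu)$1) ((snd wu)$2))
              (3/2 + (fst wu)$1 * (snd wu)$2 / ga2 ((snd wu)$1) ((snd wu)$2)) ((fst wu)$2)"

lemma ga2_pos_iff: "ga2 a b > 0 \<longleftrightarrow> a \<noteq> 0 \<or> b \<noteq> 0"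
  unfolding ga2_def by (auto split: abs_split)

lemma ga2_hom: "t > 0 \<Longrightarrow> ga2 (t*a) (t*b) = t * ga2 a b"
  using gge_hom[OF gge_ga2] by blast

lemma ga2_cont: "continuous_on S (\<lambda>x. f x) \<Longrightarrow> continuous_on S (\<lambda>x. g x) \<Longrightarrow> continuous_on S (\<lambda>x. ga2 (f x) (g x))"
  unfolding ga2_def by (auto intro!: continuous_intros)

lemma norm_v2_pos: "a \<noteq> 0 \<or> b \<noteq> 0 \<Longrightarrow> norm (v2 a b) > 0"
  using v2_zero by auto

definition RB :: "(real^2) set" where "RB = cbox (v2 1 0) (v2 2 1)"
definition RBo :: "(real^2) set" where "RBo = box (v2 1 0) (v2 2 1)"

lemma mem_RB: "w \<in> RB \<longleftrightarrow> 1 \<le> w$1 \<and> w$1 \<le> 2 \<and> 0 \<le> w$2 \<and> w$2 \<le> 1"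
  by (auto simp: RB_def mem_box_cart forall_2)
lemma mem_RBo: "w \<in> RBo \<longleftrightarrow> 1 < w$1 \<and> w$1 < 2 \<and> 0 < w$2 \<and> w$2 < 1"
  by (auto simp: RBo_def mem_box_cart forall_2)

definition Mo :: "(real^3) set" where
  "Mo = {p. 1 < ga2 (p$1-4) (p$2-3/2) \<and> ga2 (p$1-4) (p$2-3/2) < 2 \<and> 0 < p$3 \<and> p$3 < 1}"

lemma hf_components:
  assumes "1 \<le> ga2 (p$1-4) (p$2-3/2)"
  shows "hg (hf p) = p"
    and "norm (snd (hf p)) = 1"
    and "fst (hf p) = v2 (ga2 (p$1-4) (p$2-3/2)) (p$3)"
proof -
  define a where "a = p$1 - 4"
  define b where "b = p$2 - 3/2"
  have ab: "a \<noteq> 0 \<or> b \<noteq> 0" using assms ga2_pos_iff[of a b] unfolding a_def b_def by linarith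
  define n where "n = norm (v2 a b)"
  have n: "n > 0" using norm_v2_pos[OF ab] n_def by simp
  define N where "N = ga2 a b"
  have N: "N > 0" using ab ga2_pos_iff N_def by simp
  have u: "snd (hf p) = v2 (a/n) (b/n)"
    by (rule vec2_eqI) (simp_all add: hf_def a_def b_def n_def)
  have nu: "ga2 (a/n) (b/n) = N / n"
    using ga2_hom[of "1/n" a b] n by (simp add: N_def)
  show "hg (hf p) = p"
  proof (rule vec3_eqI)
    show "hg (hf p) $ 1 = p $ 1" using u nu n N
      by (simp add: hg_def hf_def a_def[symmetric] b_def[symmetric] N_def[symmetric]) (simp add: a_def field_simps)
    show "hg (hf p) $ 2 = p $ 2" using u nu n N
      by (simp add: hg_def hf_def a_def[symmetric] b_def[symmetric] N_def[symmetric]) (simp add: b_def field_simps)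
    show "hg (hf p) $ 3 = p $ 3" by (simp add: hg_def hf_def)
  qed
  show "norm (snd (hf p)) = 1" using n by (simp add: hf_def a_def[symmetric] b_def[symmetric] n_def[symmetric])
  show "fst (hf p) = v2 (ga2 (p$1-4) (p$2-3/2)) (p$3)" by (simp add: hf_def)
qed

lemma hg_components:
  assumes w: "w$1 > 0" and u: "norm u = 1"
  shows "hf (hg (w,u)) = (w,u)"
    and "ga2 ((hg (w,u))$1 - 4) ((hg (w,u))$2 - 3/2) = w$1"
    and "(hg (w,u))$3 = w$2"
proof -
  have u0: "u$1 \<noteq> 0 \<or> u$2 \<noteq> 0" using u by (metis norm_zero vec2_eqI zero_index zero_neq_one)
  define t where "t = w$1 / ga2 (u$1) (u$2)"
  have g: "ga2 (u$1) (u$2) > 0" using u0 ga2_pos_iff by simp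
  have t: "t > 0" using w g t_def by simp
  have o1: "(hg (w,u))$1 - 4 = t * u$1" by (simp add: hg_def t_def)
  have o2: "(hg (w,u))$2 - 3/2 = t * u$2" by (simp add: hg_def t_def)
  have gg: "ga2 ((hg (w,u))$1 - 4) ((hg (w,u))$2 - 3/2) = w$1"
    using o1 o2 ga2_hom[OF t, of "u$1" "u$2"] g by (simp add: t_def)
  then show "ga2 ((hg (w,u))$1 - 4) ((hg (w,u))$2 - 3/2) = w$1" .
  show h3: "(hg (w,u))$3 = w$2" by (simp add: hg_def)
  have vv: "v2 ((hg (w,u))$1 - 4) ((hg (w,u))$2 - 3/2) = t *\<^sub>R u"
    by (rule vec2_eqI) (simp_all add: o1 o2)
  have "snd (hf (hg (w,u))) = u"
    unfolding hf_def using vv t u by simp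
  moreover have "fst (hf (hg (w,u))) = w"
    unfolding hf_def using gg h3 by (simp add: vec2_eqI)
  ultimately show "hf (hg (w,u)) = (w,u)" by (metis prod.collapse)
qed

lemma hf_cont_t1: "continuous_on Mset (\<lambda>p. ga2 (p$1-4) (p$2-3/2))"
  by (rule ga2_cont; intro continuous_intros)
lemma hf_cont_t2: "continuous_on Mset (\<lambda>p. v2 (p$1-4) (p$2-3/2))"
  unfolding v2_def by (intro continuous_intros)
lemma hf_cont_t3: "continuous_on Mset (\<lambda>p. v2 (ga2 (p$1-4) (p$2-3/2)) (p$3))"
  unfolding v2_def by (intro continuous_on_add continuous_on_scaleR continuous_on_const hf_cont_t1 continuous_on_component continuous_on_id)
lemma hf_cont_t4: "\<forall>p\<in>Mset. norm (v2 (p$1-4) (p$2-3/2)) \<noteq> 0 \<Longrightarrow> continuous_on Mset (\<lambda>p. 1 / norm (v2 (p$1-4) (p$2-3/2)))"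
  by (intro continuous_on_divide continuous_on_const continuous_on_norm hf_cont_t2) auto
lemma hf_cont_t5: "\<forall>p\<in>Mset. norm (v2 (p$1-4) (p$2-3/2)) \<noteq> 0 \<Longrightarrow> continuous_on Mset hf"
  unfolding hf_def by (intro continuous_on_Pair continuous_on_scaleR hf_cont_t3 hf_cont_t4 hf_cont_t2)
lemma hg_cont_s1: "continuous_on (RB \<times> sphere 0 1) (\<lambda>x::(real^2)\<times>(real^2). ga2 ((snd x)$1) ((snd x)$2))"
  by (rule ga2_cont; intro continuous_intros)
lemma hg_cont_s2: "\<forall>x\<in>RB \<times> sphere (0::real^2) 1. ga2 ((snd x)$1) ((snd x)$2) \<noteq> 0 \<Longrightarrow>
   continuous_on (RB \<times> sphere 0 1) (\<lambda>x::(real^2)\<times>(real^2). (fst x)$1 * (snd x)$k / ga2 ((snd x)$1) ((snd x)$2))"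
  by (intro continuous_on_divide continuous_on_mult continuous_on_component continuous_on_fst continuous_on_snd continuous_on_id hg_cont_s1) auto
lemma hg_cont_s3: "\<forall>x\<in>RB \<times> sphere (0::real^2) 1. ga2 ((snd x)$1) ((snd x)$2) \<noteq> 0 \<Longrightarrow> continuous_on (RB \<times> sphere 0 1) hg"
  unfolding hg_def v3_def
  by (intro continuous_on_add continuous_on_scaleR continuous_on_const hg_cont_s2 continuous_on_component continuous_on_fst continuous_on_id)

lemma hf_homeo: "homeomorphism Mset (RB \<times> sphere 0 1) hf hg"
proof (rule homeomorphismI)
  show "continuous_on Mset hf"
  proof (rule hf_cont_t5, rule ballI)
    fix p assume "p \<in> Mset"
    then have "1 \<le> ga2 (p$1-4) (p$2-3/2)" by (simp add: Mset_def)
    then have "p$1-4 \<noteq> 0 \<or> p$2-3/2 \<noteq> 0" using ga2_pos_iff[of "p$1-4" "p$2-3/2"] by linarith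
    then show "norm (v2 (p$1-4) (p$2-3/2)) \<noteq> 0" using norm_v2_pos[of "p$1-4" "p$2-3/2"] by linarith
  qed
  show "continuous_on (RB \<times> sphere 0 1) hg"
  proof (rule hg_cont_s3, rule ballI)
    fix x :: "(real^2) \<times> (real^2)" assume "x \<in> RB \<times> sphere 0 1"
    then have n: "norm (snd x) = 1" by auto
    have "(snd x)$1 \<noteq> 0 \<or> (snd x)$2 \<noteq> 0"
    proof (rule ccontr)
      assume "\<not> ((snd x)$1 \<noteq> 0 \<or> (snd x)$2 \<noteq> 0)"
      then have "snd x = 0" by (intro vec2_eqI) auto
      then show False using n by simp
    qed
    then show "ga2 ((snd x)$1) ((snd x)$2) \<noteq> 0" using ga2_pos_iff[of "(snd x)$1" "(snd x)$2"] by linarith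
  qed
  show "hf ` Mset \<subseteq> RB \<times> sphere 0 1"
  proof (rule image_subsetI)
    fix p assume p: "p \<in> Mset"
    then have "1 \<le> ga2 (p$1-4) (p$2-3/2)" by (simp add: Mset_def)
    note hc = hf_components[OF this]
    have "fst (hf p) \<in> RB" using p hc(3) by (simp add: Mset_def mem_RB)
    moreover have "snd (hf p) \<in> sphere 0 1" using hc(2) by simp
    ultimately show "hf p \<in> RB \<times> sphere 0 1" by (simp add: mem_Times_iff)
  qed
  show "hg ` (RB \<times> sphere 0 1) \<subseteq> Mset"
  proof (rule image_subsetI)
    fix x :: "(real^2) \<times> (real^2)" assume x: "x \<in> RB \<times> sphere 0 1"
    obtain w u where xwu: "x = (w,u)" by fastforce
    then have w: "1 \<le> w$1" "w$1 \<le> 2" "0 \<le> w$2" "w$2 \<le> 1" and u: "norm u = 1" using x by (auto simp: mem_RB)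
    note hc = hg_components[of w u]
    show "hg x \<in> Mset" using hc w u xwu by (simp add: Mset_def)
  qed
  show "hg (hf p) = p" if "p \<in> Mset" for p
    using that hf_components(1) by (simp add: Mset_def)
  show "hf (hg y) = y" if "y \<in> RB \<times> sphere 0 1" for y
  proof -
    obtain w u where y: "y = (w,u)" by fastforce
    then show ?thesis using that hg_components(1)[of w u] by (auto simp: mem_RB)
  qed
qed

lemma hf_image_Mo: "hf ` Mo = RBo \<times> sphere 0 1"
proof
  show "hf ` Mo \<subseteq> RBo \<times> sphere 0 1"
  proof (rule image_subsetI)
    fix p assume p: "p \<in> Mo"
    then have "1 \<le> ga2 (p$1-4) (p$2-3/2)" by (simp add: Mo_def)
    note hc = hf_components[OF this]
    have "fst (hf p) \<in> RBo" using p hc(3) by (simp add: Mo_def mem_RBo)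
    moreover have "snd (hf p) \<in> sphere 0 1" using hc(2) by simp
    ultimately show "hf p \<in> RBo \<times> sphere 0 1" by (simp add: mem_Times_iff)
  qed
  show "RBo \<times> sphere 0 1 \<subseteq> hf ` Mo"
  proof
    fix x :: "(real^2) \<times> (real^2)" assume x: "x \<in> RBo \<times> sphere 0 1"
    obtain w u where xwu: "x = (w,u)" by fastforce
    then have w: "1 < w$1" "w$1 < 2" "0 < w$2" "w$2 < 1" and u: "norm u = 1" using x by (auto simp: mem_RBo)
    note hc = hg_components[of w u]
    have "hg (w,u) \<in> Mo" using hc w u by (simp add: Mo_def)
    moreover have "hf (hg (w,u)) = (w,u)" using hc w u by simp
    ultimately show "x \<in> hf ` Mo" using xwu by (metis image_eqI)
  qed
qed


lemma not_interior_aux: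
  fixes p :: "'a::real_normed_vector"
  assumes p: "p \<in> interior S" and C: "0 \<le> C"
    and out: "\<And>d. 0 < d \<Longrightarrow> d < 1 \<Longrightarrow> \<phi> d \<notin> S"
    and near: "\<And>d. 0 < d \<Longrightarrow> dist (\<phi> d) p \<le> C * d"
  shows False
proof -
  obtain e where e: "e > 0" "ball p e \<subseteq> S" using p mem_interior by blast
  define d where "d = min (1/2) (e / (2*C+2))"
  have d: "0 < d" "d < 1" using e C by (auto simp: d_def)
  have "C * d \<le> C * (e / (2*C+2))" using C by (intro mult_left_mono) (auto simp: d_def)
  also have "\<dots> < e"
  proof -
    have ce: "0 \<le> C * e" using e C by simp
    have "e * (2*C+2) - C * e = C * e + 2 * e" by (simp add: algebra_simps)
    then have "C * e < e * (2*C+2)" using ce e by linarith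
    moreover have "0 < 2*C+2" using C by simp
    ultimately show ?thesis by (simp add: pos_divide_less_eq)
  qed
  finally have "dist (\<phi> d) p < e" using near[OF d(1)] by linarith
  then have "\<phi> d \<in> S" using e by (auto simp: dist_commute)
  then show False using out d by blast
qed

lemma open_Mo: "open Mo"
proof -
  have c: "continuous_on UNIV (\<lambda>p::real^3. ga2 (p$1-4) (p$2-3/2))"
    by (rule ga2_cont; intro continuous_intros)
  have eq: "Mo = {p. 1 < ga2 (p$1-4) (p$2-3/2)} \<inter> {p. ga2 (p$1-4) (p$2-3/2) < 2} \<inter> {p. 0 < p$3} \<inter> {p. p$3 < 1}"
    by (auto simp: Mo_def)
  have o1: "open {p::real^3. 1 < ga2 (p$1-4) (p$2-3/2)}"
    by (rule open_Collect_less[OF continuous_on_const c])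
  have o2: "open {p::real^3. ga2 (p$1-4) (p$2-3/2) < 2}"
    by (rule open_Collect_less[OF c continuous_on_const])
  have o3: "open {p::real^3. 0 < p$3}"
    by (rule open_Collect_less[OF continuous_on_const continuous_on_component[OF continuous_on_id]])
  have o4: "open {p::real^3. p$3 < 1}"
    by (rule open_Collect_less[OF continuous_on_component[OF continuous_on_id] continuous_on_const])
  have "open ({p. 1 < ga2 (p$1-4) (p$2-3/2)} \<inter> {p. ga2 (p$1-4) (p$2-3/2) < 2} \<inter> {p. 0 < p$3} \<inter> {p::real^3. p$3 < 1})"
    by (intro open_Int o1 o2 o3 o4)
  then show ?thesis using eq by simp
qed

lemma interior_Mset: "interior Mset = Mo"
proof
  show "Mo \<subseteq> interior Mset"
  proof (rule interior_maximal)
    show "Mo \<subseteq> Mset" by (auto simp: Mo_def Mset_def)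
    show "open Mo" by (rule open_Mo)
  qed
next
  show "interior Mset \<subseteq> Mo"
  proof
    fix p assume pi: "p \<in> interior Mset"
    then have pM: "p \<in> Mset" using interior_subset by blast
    define a where "a = p$1 - 4"
    define b where "b = p$2 - 3/2"
    define w where "w = v3 a b 0"
    have pa: "1 \<le> ga2 a b" "ga2 a b \<le> 2" "0 \<le> p$3" "p$3 \<le> 1" using pM by (auto simp: Mset_def a_def b_def)
    have dw: "dist (p + s *\<^sub>R w) p \<le> norm w * \<bar>s\<bar>" for s by (simp add: dist_norm)
    have c1: "1 < ga2 a b"
    proof (rule ccontr)
      assume "\<not> 1 < ga2 a b"
      then have g1: "ga2 a b = 1" using pa by simp
      show False
      proof (rule not_interior_aux[OF pi, of "norm w" "\<lambda>d. p + (-d) *\<^sub>R w"])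
        fix d :: real assume d: "0 < d" "d < 1"
        have e1: "(p + (-d) *\<^sub>R w)$1 - 4 = (1-d)*a" by (simp add: w_def a_def algebra_simps)
        have e2: "(p + (-d) *\<^sub>R w)$2 - 3/2 = (1-d)*b" by (simp add: w_def b_def field_simps)
        have "ga2 ((p + (-d) *\<^sub>R w)$1 - 4) ((p + (-d) *\<^sub>R w)$2 - 3/2) = ga2 ((1-d)*a) ((1-d)*b)"
          by (simp only: e1 e2)
        also have "\<dots> = (1-d) * ga2 a b" using d by (intro ga2_hom) simp
        finally show "p + (-d) *\<^sub>R w \<notin> Mset" using g1 d by (simp add: Mset_def)
      next
        fix d :: real assume "0 < d"
        then show "dist (p + (-d) *\<^sub>R w) p \<le> norm w * d" using dw[of "-d"] by simp
      qed simp
    qed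
    have c2: "ga2 a b < 2"
    proof (rule ccontr)
      assume "\<not> ga2 a b < 2"
      then have g1: "ga2 a b = 2" using pa by simp
      show False
      proof (rule not_interior_aux[OF pi, of "norm w" "\<lambda>d. p + d *\<^sub>R w"])
        fix d :: real assume d: "0 < d" "d < 1"
        have e1: "(p + d *\<^sub>R w)$1 - 4 = (1+d)*a" by (simp add: w_def a_def algebra_simps)
        have e2: "(p + d *\<^sub>R w)$2 - 3/2 = (1+d)*b" by (simp add: w_def b_def field_simps)
        have "ga2 ((p + d *\<^sub>R w)$1 - 4) ((p + d *\<^sub>R w)$2 - 3/2) = ga2 ((1+d)*a) ((1+d)*b)"
          by (simp only: e1 e2)
        also have "\<dots> = (1+d) * ga2 a b" using d by (intro ga2_hom) simp
        finally show "p + d *\<^sub>R w \<notin> Mset" using g1 d by (simp add: Mset_def)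
      next
        fix d :: real assume "0 < d"
        then show "dist (p + d *\<^sub>R w) p \<le> norm w * d" using dw[of d] by simp
      qed simp
    qed
    have c3: "0 < p$3"
    proof (rule ccontr)
      assume "\<not> 0 < p$3"
      then have z: "p$3 = 0" using pa by simp
      show False
      proof (rule not_interior_aux[OF pi, of 1 "\<lambda>d. p + (-d) *\<^sub>R axis 3 1"])
        fix d :: real assume d: "0 < d" "d < 1"
        show "p + (-d) *\<^sub>R axis 3 1 \<notin> Mset" using z d by (simp add: Mset_def axis_def)
      next
        fix d :: real assume "0 < d"
        then show "dist (p + (-d) *\<^sub>R axis 3 1) p \<le> 1 * d" by (simp add: dist_norm)
      qed simp
    qed
    have c4: "p$3 < 1"
    proof (rule ccontr)
      assume "\<not> p$3 < 1"
      then have z: "p$3 = 1" using pa by simp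
      show False
      proof (rule not_interior_aux[OF pi, of 1 "\<lambda>d. p + d *\<^sub>R axis 3 1"])
        fix d :: real assume d: "0 < d" "d < 1"
        show "p + d *\<^sub>R axis 3 1 \<notin> Mset" using z d by (simp add: Mset_def axis_def)
      next
        fix d :: real assume "0 < d"
        then show "dist (p + d *\<^sub>R axis 3 1) p \<le> 1 * d" by (simp add: dist_norm)
      qed simp
    qed
    show "p \<in> Mo" using c1 c2 c3 c4 by (simp add: Mo_def a_def b_def)
  qed
qed

lemma homeomorphic_Times_sets:
  assumes "S homeomorphic S'" "T homeomorphic T'"
  shows "(S \<times> T) homeomorphic (S' \<times> T')"
proof -
  obtain f g where fg: "homeomorphism S S' f g" using assms(1) homeomorphic_def by blast
  obtain h k where hk: "homeomorphism T T' h k" using assms(2) homeomorphic_def by blast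
  have "homeomorphism (S \<times> T) (S' \<times> T') (\<lambda>(x,y). (f x, h y)) (\<lambda>(x,y). (g x, k y))"
  proof (rule homeomorphismI)
    have cf: "continuous_on S f" and cg: "continuous_on S' g" and ch: "continuous_on T h" and ck: "continuous_on T' k"
      using fg hk by (auto simp: homeomorphism_def)
    show "continuous_on (S \<times> T) (\<lambda>(x,y). (f x, h y))"
      unfolding case_prod_beta
      by (intro continuous_on_Pair continuous_on_compose2[OF cf continuous_on_fst] continuous_on_compose2[OF ch continuous_on_snd]
          continuous_on_id) auto
    show "continuous_on (S' \<times> T') (\<lambda>(x,y). (g x, k y))"
      unfolding case_prod_beta
      by (intro continuous_on_Pair continuous_on_compose2[OF cg continuous_on_fst] continuous_on_compose2[OF ck continuous_on_snd]
          continuous_on_id) auto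
  qed (use fg hk in \<open>auto simp: homeomorphism_def\<close>)
  then show ?thesis unfolding homeomorphic_def by blast
qed

lemma homeo_image_homeomorphic:
  assumes "homeomorphism UNIV UNIV f g" "f ` S = T"
  shows "S homeomorphic T"
  unfolding homeomorphic_def using homeomorphism_of_subsets[OF assms(1) _ _ assms(2)] by blast

definition Aset :: "(real^3) set" where
  "Aset = bx 0 0 0 2 4 1 \<union> bx 2 0 0 6 1 2 \<union> bx 2 2 0 6 3 2 \<union> bx 6 0 0 8 4 1"

lemma Aset_homeo_M: "Aset homeomorphic Mset"
proof -
  have h1: "homeomorphism UNIV UNIV (radF ga1 ga2 1 3 4 (1/2)) (radF ga2 ga1 1 3 4 (1/2))"
    by (rule radF_homeo[OF gge_ga1 gge_ga2, of 3]) (auto simp: ga_bounds)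
  have h2: "homeomorphism UNIV UNIV (radF gb1 gb2 1 2 1 (5/2)) (radF gb2 gb1 1 2 1 (5/2))"
    by (rule radF_homeo[OF gge_gb1 gge_gb2, of 3]) (auto simp: gb_bounds)
  have h3: "homeomorphism UNIV UNIV (radF gb1 gb2 1 2 7 (5/2)) (radF gb2 gb1 1 2 7 (5/2))"
    by (rule radF_homeo[OF gge_gb1 gge_gb2, of 3]) (auto simp: gb_bounds)
  have "Aset homeomorphic (bx 0 0 0 8 1 1 \<union> bx 0 2 0 8 3 1 \<union> bx 0 0 0 2 4 1 \<union> bx 6 0 0 8 4 1)"
    unfolding Aset_def using homeo_image_homeomorphic[OF h1 stepa_img] .
  also have "\<dots> homeomorphic (bx 0 0 0 8 1 1 \<union> bx 0 2 0 8 3 1 \<union> bx 0 0 0 2 3 1 \<union> bx 6 0 0 8 4 1)"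
    using homeo_image_homeomorphic[OF h2 stepb_img] .
  also have "\<dots> homeomorphic (bx 0 0 0 8 1 1 \<union> bx 0 2 0 8 3 1 \<union> bx 0 0 0 2 3 1 \<union> bx 6 0 0 8 3 1)"
    using homeo_image_homeomorphic[OF h3 stepc_img] .
  also have "\<dots> homeomorphic Mset"
    using homeo_image_homeomorphic[OF yFG_homeo stepd_img] .
  finally show ?thesis .
qed

lemma RB_homeo: "RB homeomorphic cball (0::real^2) 1"
proof (rule homeomorphic_convex_compact_sets)
  have "v2 (3/2) (1/2) \<in> interior RB" by (simp add: RB_def mem_box_cart forall_2)
  then have "interior RB \<noteq> {}" by blast
  then show "aff_dim RB = aff_dim (cball (0::real^2) 1)"
    by (simp add: aff_dim_nonempty_interior aff_dim_cball)
qed (auto simp: RB_def)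

lemma RBo_homeo: "RBo homeomorphic ball (0::real^2) 1"
proof -
  have "interior RB homeomorphic interior (cball (0::real^2) 1)"
    by (rule homeomorphic_interiors_same_dimension[OF RB_homeo]) simp
  then show ?thesis by (simp add: RB_def RBo_def)
qed


lemma norm3: "norm (x::real^3) = sqrt ((x$1)^2 + (x$2)^2 + (x$3)^2)"
  by (simp add: norm_vec_def L2_set_def sum_3)

definition ciso :: "(real^3 \<Rightarrow> real^3) \<Rightarrow> (real^3 \<Rightarrow> real^3) \<Rightarrow> bool" where
  "ciso f h \<longleftrightarrow> homeomorphism UNIV UNIV f h \<and> (\<forall>x y. dist (f x) (f y) = dist x y)"

lemma cisoI:
  assumes "\<And>x. h (f x) = x" "\<And>y. f (h y) = y" "continuous_on UNIV f" "continuous_on UNIV h"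
    "\<And>x y. dist (f x) (f y) = dist x y"
  shows "ciso f h"
  unfolding ciso_def using assms by (auto intro!: homeomorphismI)

lemma ciso_inv: "ciso f h \<Longrightarrow> h (f x) = x" "ciso f h \<Longrightarrow> f (h x) = x"
  unfolding ciso_def homeomorphism_def by auto

lemma ciso_sym: "ciso f h \<Longrightarrow> ciso h f"
  unfolding ciso_def
  by (metis homeomorphism_apply2 homeomorphism_symD iso_tuple_UNIV_I)

lemma ciso_comp: "ciso f fi \<Longrightarrow> ciso g gi \<Longrightarrow> ciso (f \<circ> g) (gi \<circ> fi)"
  unfolding ciso_def using homeomorphism_compose[of UNIV UNIV g gi UNIV f fi] by auto

lemma ciso_congruent: "ciso f h \<Longrightarrow> f ` A = B \<Longrightarrow> congruent A B"
  unfolding congruent_def ciso_def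
proof (intro exI conjI)
  assume "homeomorphism UNIV UNIV f h \<and> (\<forall>x y. dist (f x) (f y) = dist x y)" "f ` A = B"
  then show "surj f" "\<forall>x y. dist (f x) (f y) = dist x y" "f ` A = B"
    by (auto simp: homeomorphism_def)
qed

lemma ciso_interior: "ciso f h \<Longrightarrow> interior (f ` S) = f ` interior S"
proof -
  assume c: "ciso f h"
  then have hm: "homeomorphism UNIV UNIV f h" unfolding ciso_def by blast
  have om: "open (f ` U)" if "open U" "homeomorphism UNIV UNIV f h" for U :: "(real^3) set" and f h :: "real^3 \<Rightarrow> real^3"
  proof -
    have "f ` U = h -` U" using that(2) unfolding homeomorphism_def by force
    moreover have "continuous_on UNIV h" using that(2) unfolding homeomorphism_def by blast
    ultimately show ?thesis using that(1) by (simp add: continuous_on_open_vimage)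
  qed
  have 1: "f ` interior S \<subseteq> interior (f ` S)"
    by (rule interior_maximal) (auto intro: om[OF _ hm] interior_subset[THEN subsetD] image_mono)
  have "h ` interior (f ` S) \<subseteq> interior (h ` f ` S)"
    by (rule interior_maximal) (auto intro: om[OF _ homeomorphism_symD[OF hm]] interior_subset[THEN subsetD])
  moreover have "h ` f ` S = S" using hm unfolding homeomorphism_def by (simp add: image_comp)
  ultimately have "f ` h ` interior (f ` S) \<subseteq> f ` interior S" by (simp add: image_mono)
  moreover have "f ` h ` interior (f ` S) = interior (f ` S)" using hm unfolding homeomorphism_def by (simp add: image_comp)
  ultimately show ?thesis using 1 by blast
qed

lemma img_by_inv: "(\<And>x. x \<in> A \<Longrightarrow> f x \<in> B) \<Longrightarrow> (\<And>y. y \<in> B \<Longrightarrow> h y \<in> A) \<Longrightarrow> (\<And>y. f (h y) = y) \<Longrightarrow> f ` A = B"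
  by (metis image_eqI subsetI subset_antisym image_subsetI)

definition gmap :: "real^3 \<Rightarrow> real^3" where "gmap x = v3 (x$1) (4 - x$2) (2 - x$3)"
definition ph1 :: "real^3 \<Rightarrow> real^3" where "ph1 x = v3 (x$2) (x$1) (x$3)"
definition ph2 :: "real^3 \<Rightarrow> real^3" where "ph2 x = v3 (x$1+4) (x$3) (x$2)"
definition ph2i :: "real^3 \<Rightarrow> real^3" where "ph2i x = v3 (x$1-4) (x$3) (x$2)"
definition ph3 :: "real^3 \<Rightarrow> real^3" where "ph3 x = v3 (x$1+4) (x$3+4) (x$2)"
definition ph3i :: "real^3 \<Rightarrow> real^3" where "ph3i x = v3 (x$1-4) (x$3) (x$2-4)"
definition ph4 :: "real^3 \<Rightarrow> real^3" where "ph4 x = v3 (x$2+12) (x$1) (x$3)"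
definition ph4i :: "real^3 \<Rightarrow> real^3" where "ph4i x = v3 (x$2) (x$1-12) (x$3)"
definition be2 :: "real^3 \<Rightarrow> real^3" where "be2 x = v3 (x$1-2) (x$3) (x$2)"
definition be2i :: "real^3 \<Rightarrow> real^3" where "be2i x = v3 (x$1+2) (x$3) (x$2)"
definition be3 :: "real^3 \<Rightarrow> real^3" where "be3 x = v3 (x$1-2) (x$3) (x$2-2)"
definition be3i :: "real^3 \<Rightarrow> real^3" where "be3i x = v3 (x$1+2) (x$3+2) (x$2)"
definition be4 :: "real^3 \<Rightarrow> real^3" where "be4 x = v3 (x$2) (x$1-6) (x$3)"
definition be4i :: "real^3 \<Rightarrow> real^3" where "be4i x = v3 (x$2+6) (x$1) (x$3)"

lemmas mapdefs = gmap_def ph1_def ph2_def ph2i_def ph3_def ph3i_def ph4_def ph4i_def be2_def be2i_def be3_def be3i_def be4_def be4i_def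

lemma v3_diff: "v3 a b c - v3 a' b' c' = v3 (a-a') (b-b') (c-c')"
  by (rule vec3_eqI) simp_all

lemma dist_v3: "dist (v3 a b c) (v3 a' b' c') = sqrt ((a-a')^2 + (b-b')^2 + (c-c')^2)"
  by (simp add: dist_norm v3_diff norm3)

lemma dist3: "dist (x::real^3) y = sqrt ((x$1-y$1)^2 + (x$2-y$2)^2 + (x$3-y$3)^2)"
  by (simp add: dist_norm norm3)

lemma cont_v3: "continuous_on S f1 \<Longrightarrow> continuous_on S f2 \<Longrightarrow> continuous_on S f3 \<Longrightarrow>
   continuous_on S (\<lambda>x. v3 (f1 x) (f2 x) (f3 x))"
  unfolding v3_def by (intro continuous_intros)

lemma ciso_gmap: "ciso gmap gmap"
  unfolding gmap_def by (rule cisoI; (intro cont_v3 continuous_intros)?; simp add: dist_v3 dist3 power2_commute vec3_eqI)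

lemma ciso_ph1: "ciso ph1 ph1"
  unfolding ph1_def by (rule cisoI; (intro cont_v3 continuous_intros)?; simp add: dist_v3 dist3 vec3_eqI add_ac)
lemma ciso_ph2: "ciso ph2 ph2i"
  unfolding ph2_def ph2i_def by (rule cisoI; (intro cont_v3 continuous_intros)?; simp add: dist_v3 dist3 vec3_eqI add_ac)
lemma ciso_ph3: "ciso ph3 ph3i"
  unfolding ph3_def ph3i_def by (rule cisoI; (intro cont_v3 continuous_intros)?; simp add: dist_v3 dist3 vec3_eqI add_ac)
lemma ciso_ph4: "ciso ph4 ph4i"
  unfolding ph4_def ph4i_def by (rule cisoI; (intro cont_v3 continuous_intros)?; simp add: dist_v3 dist3 vec3_eqI add_ac)
lemma ciso_be2: "ciso be2 be2i"
  unfolding be2_def be2i_def by (rule cisoI; (intro cont_v3 continuous_intros)?; simp add: dist_v3 dist3 vec3_eqI add_ac)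
lemma ciso_be3: "ciso be3 be3i"
  unfolding be3_def be3i_def by (rule cisoI; (intro cont_v3 continuous_intros)?; simp add: dist_v3 dist3 vec3_eqI add_ac)
lemma ciso_be4: "ciso be4 be4i"
  unfolding be4_def be4i_def by (rule cisoI; (intro cont_v3 continuous_intros)?; simp add: dist_v3 dist3 vec3_eqI add_ac)


lemma gmap_c: "gmap x $ 1 = x$1" "gmap x $ 2 = 4 - x$2" "gmap x $ 3 = 2 - x$3" by (simp_all add: gmap_def)

lemma gmap_bx: "gmap ` bx a1 a2 a3 b1 b2 b3 = bx a1 (4-b2) (2-b3) b1 (4-a2) (2-a3)"
  by (rule img_by_inv[where h=gmap]) (auto simp: mem_bx gmap_def vec3_eqI)
lemma ph1_bx: "ph1 ` bx a1 a2 a3 b1 b2 b3 = bx a2 a1 a3 b2 b1 b3"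
  by (rule img_by_inv[where h=ph1]) (auto simp: mem_bx ph1_def vec3_eqI)
lemma ph2_bx: "ph2 ` bx a1 a2 a3 b1 b2 b3 = bx (a1+4) a3 a2 (b1+4) b3 b2"
  by (rule img_by_inv[where h=ph2i]) (auto simp: mem_bx ph2_def ph2i_def vec3_eqI)
lemma ph3_bx: "ph3 ` bx a1 a2 a3 b1 b2 b3 = bx (a1+4) (a3+4) a2 (b1+4) (b3+4) b2"
  by (rule img_by_inv[where h=ph3i]) (auto simp: mem_bx ph3_def ph3i_def vec3_eqI)
lemma ph4_bx: "ph4 ` bx a1 a2 a3 b1 b2 b3 = bx (a2+12) a1 a3 (b2+12) b1 b3"
  by (rule img_by_inv[where h=ph4i]) (auto simp: mem_bx ph4_def ph4i_def vec3_eqI)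
lemma be2_bx: "be2 ` bx a1 a2 a3 b1 b2 b3 = bx (a1-2) a3 a2 (b1-2) b3 b2"
  by (rule img_by_inv[where h=be2i]) (auto simp: mem_bx be2_def be2i_def vec3_eqI)
lemma be3_bx: "be3 ` bx a1 a2 a3 b1 b2 b3 = bx (a1-2) a3 (a2-2) (b1-2) b3 (b2-2)"
  by (rule img_by_inv[where h=be3i]) (auto simp: mem_bx be3_def be3i_def vec3_eqI)
lemma be4_bx: "be4 ` bx a1 a2 a3 b1 b2 b3 = bx a2 (a1-6) a3 b2 (b1-6) b3"
  by (rule img_by_inv[where h=be4i]) (auto simp: mem_bx be4_def be4i_def vec3_eqI)
lemma scale2_bx: "(\<lambda>x. (2::real) *\<^sub>R x) ` bx a1 a2 a3 b1 b2 b3 = bx (2*a1) (2*a2) (2*a3) (2*b1) (2*b2) (2*b3)"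
  by (rule img_by_inv[where h="\<lambda>x. (1/2::real) *\<^sub>R x"]) (auto simp: mem_bx)

definition gA :: "(real^3) set" where
  "gA = bx 0 0 1 2 4 2 \<union> bx 2 3 0 6 4 2 \<union> bx 2 1 0 6 2 2 \<union> bx 6 0 1 8 4 2"

lemma gmap_Aset: "gmap ` Aset = gA"
  by (simp add: Aset_def gA_def image_Un gmap_bx)

lemma AgA_K: "Aset \<union> gA = bx 0 0 0 8 4 2"
proof
  show "Aset \<union> gA \<subseteq> bx 0 0 0 8 4 2" by (auto simp: Aset_def gA_def mem_bx)
next
  show "bx 0 0 0 8 4 2 \<subseteq> Aset \<union> gA"
  proof
    fix p assume "p \<in> bx 0 0 0 8 4 2"
    then have p: "0 \<le> p$1" "p$1 \<le> 8" "0 \<le> p$2" "p$2 \<le> 4" "0 \<le> p$3" "p$3 \<le> 2" by (auto simp: mem_bx)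
    show "p \<in> Aset \<union> gA"
    proof (cases "p$1 \<le> 2")
      case True
      then show ?thesis using p by (cases "p$3 \<le> 1") (auto simp: Aset_def gA_def mem_bx)
    next
      case c1: False
      show ?thesis
      proof (cases "p$1 \<le> 6")
        case True
        then show ?thesis using p c1
          by (cases "p$2 \<le> 1"; cases "p$2 \<le> 2"; cases "p$2 \<le> 3") (auto simp: Aset_def gA_def mem_bx)
      next
        case False
        then show ?thesis using p by (cases "p$3 \<le> 1") (auto simp: Aset_def gA_def mem_bx)
      qed
    qed
  qed
qed

lemma interior_bx: "interior (bx a1 a2 a3 b1 b2 b3) = {p. a1 < p$1 \<and> p$1 < b1 \<and> a2 < p$2 \<and> p$2 < b2 \<and> a3 < p$3 \<and> p$3 < b3}"
  by (auto simp: bx_def mem_box_cart forall_3)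

lemma bx_idisj: "b1 \<le> a1' \<or> b1' \<le> a1 \<or> b2 \<le> a2' \<or> b2' \<le> a2 \<or> b3 \<le> a3' \<or> b3' \<le> a3 \<Longrightarrow>
   interior (bx a1 a2 a3 b1 b2 b3) \<inter> interior (bx a1' a2' a3' b1' b2' b3') = {}"
  by (auto simp: interior_bx)

lemma interior_unions_disj:
  fixes F G :: "(real^3) set set"
  assumes "finite F" "finite G" "\<And>T. T\<in>F \<Longrightarrow> \<exists>a b. T = cbox a b" "\<And>T. T\<in>G \<Longrightarrow> \<exists>a b. T = cbox a b"
    and d: "\<And>S T. S\<in>F \<Longrightarrow> T\<in>G \<Longrightarrow> interior S \<inter> interior T = {}"
  shows "interior (\<Union>F) \<inter> interior (\<Union>G) = {}"
proof (rule Int_interior_Union_intervals[OF assms(2) open_interior assms(4)])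
  fix T assume T: "T \<in> G"
  have "interior T \<inter> interior (\<Union>F) = {}"
  proof (rule Int_interior_Union_intervals[OF assms(1) open_interior assms(3)])
    fix S assume "S \<in> F" then show "interior T \<inter> interior S = {}" using d T by blast
  qed
  then show "interior (\<Union>F) \<inter> interior T = {}" by blast
qed

lemma bx_cbox: "\<exists>a b. bx a1 a2 a3 b1 b2 b3 = cbox a b" by (auto simp: bx_def)

lemma int_A_gA: "interior Aset \<inter> interior gA = {}"
proof -
  have "interior (\<Union>{bx 0 0 0 2 4 1, bx 2 0 0 6 1 2, bx 2 2 0 6 3 2, bx 6 0 0 8 4 1}) \<inter>
        interior (\<Union>{bx 0 0 1 2 4 2, bx 2 3 0 6 4 2, bx 2 1 0 6 2 2, bx 6 0 1 8 4 2}) = {}"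
    by (rule interior_unions_disj) (auto simp: bx_cbox interior_bx)
  then show ?thesis by (simp add: Aset_def gA_def Un_assoc)
qed


lemma all4: "(\<forall>i<(4::nat). P i) \<longleftrightarrow> P 0 \<and> P 1 \<and> P 2 \<and> P 3"
  by (auto simp: less_Suc_eq eval_nat_numeral)
lemma ex4: "(\<exists>i<(4::nat). P i) \<longleftrightarrow> P 0 \<or> P 1 \<or> P 2 \<or> P 3"
  by (auto simp: less_Suc_eq eval_nat_numeral)
lemma ex8: "(\<exists>i<(8::nat). P i) \<longleftrightarrow> P 0 \<or> P 1 \<or> P 2 \<or> P 3 \<or> P 4 \<or> P 5 \<or> P 6 \<or> P 7"
  by (auto simp: less_Suc_eq eval_nat_numeral)
lemma UN4: "(\<Union>i<(4::nat). f i) = f 0 \<union> f 1 \<union> f 2 \<union> f 3"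
proof -
  have "{..<(4::nat)} = {0,1,2,3}" by auto
  then show ?thesis by (simp add: Un_ac)
qed
lemma UN8: "(\<Union>i<(8::nat). f i) = f 0 \<union> f 1 \<union> f 2 \<union> f 3 \<union> f 4 \<union> f 5 \<union> f 6 \<union> f 7"
proof -
  have "{..<(8::nat)} = {0,1,2,3,4,5,6,7}" by auto
  then show ?thesis by (simp add: Un_ac)
qed

definition phs :: "nat \<Rightarrow> real^3 \<Rightarrow> real^3" where "phs k = [ph1, ph2, ph3, ph4] ! k"
definition phis :: "nat \<Rightarrow> real^3 \<Rightarrow> real^3" where "phis k = [ph1, ph2i, ph3i, ph4i] ! k"
definition TT :: "nat \<Rightarrow> (real^3) set" where "TT i = phs (i div 2) ` (if even i then Aset else gA)"

lemma ciso_phs: "k < 4 \<Longrightarrow> ciso (phs k) (phis k)"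
  using ciso_ph1 ciso_ph2 ciso_ph3 ciso_ph4 all4[of "\<lambda>k. ciso (phs k) (phis k)"]
  by (simp add: phs_def phis_def)

lemma gmap_gA: "gmap ` gA = Aset"
proof -
  have "gmap ` gA = gmap ` (gmap ` Aset)" using gmap_Aset by simp
  also have "\<dots> = (\<lambda>x. gmap (gmap x)) ` Aset" by (simp add: image_image)
  also have "\<dots> = Aset" using ciso_inv(1)[OF ciso_gmap] by simp
  finally show ?thesis .
qed

lemma TT_congruent: "i < 8 \<Longrightarrow> congruent (TT i) Aset"
proof -
  assume i: "i < 8"
  define k where "k = i div 2"
  have k: "k < 4" using i k_def by simp
  note c = ciso_phs[OF k]
  show ?thesis
  proof (cases "even i")
    case True
    have "phis k ` TT i = Aset" using True ciso_inv(1)[OF c]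
      by (simp add: TT_def k_def[symmetric] image_comp)
    then show ?thesis using ciso_congruent[OF ciso_sym[OF c]] by blast
  next
    case False
    have c2: "ciso (gmap \<circ> phis k) (phs k \<circ> gmap)" using ciso_comp[OF ciso_gmap ciso_sym[OF c]] .
    have "(gmap \<circ> phis k) ` TT i = gmap ` gA" using False ciso_inv(1)[OF c]
      by (simp add: TT_def k_def[symmetric] image_comp)
    then have "(gmap \<circ> phis k) ` TT i = Aset" using gmap_gA by simp
    then show ?thesis using ciso_congruent[OF c2] by blast
  qed
qed

definition BBs :: "nat \<Rightarrow> (real^3) set" where "BBs k = phs k ` (bx 0 0 0 8 4 2)"

lemma BBs_vals: "BBs 0 = bx 0 0 0 4 8 2" "BBs 1 = bx 4 0 0 12 2 4" "BBs 2 = bx 4 4 0 12 6 4" "BBs 3 = bx 12 0 0 16 8 2"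
  "BBs (Suc 0) = bx 4 0 0 12 2 4"
  by (simp_all add: BBs_def phs_def ph1_bx ph2_bx ph3_bx ph4_bx)

lemma TT_sub: "TT i \<subseteq> BBs (i div 2)"
  unfolding TT_def BBs_def using AgA_K[symmetric] by (auto intro!: image_mono)

lemma BBs_disj: "k < 4 \<Longrightarrow> l < 4 \<Longrightarrow> k \<noteq> l \<Longrightarrow> interior (BBs k) \<inter> interior (BBs l) = {}"
proof -
  have "\<forall>k<4. \<forall>l<4. k \<noteq> l \<longrightarrow> interior (BBs k) \<inter> interior (BBs l) = {}"
    unfolding all4 by (simp add: BBs_vals bx_idisj)
  then show "k < 4 \<Longrightarrow> l < 4 \<Longrightarrow> k \<noteq> l \<Longrightarrow> ?thesis" by blast
qed

lemma ciso_inj: "ciso f h \<Longrightarrow> inj f"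
  by (metis ciso_inv(1) injI)

lemma TT_same: "k < 4 \<Longrightarrow> interior (TT (2*k)) \<inter> interior (TT (2*k+1)) = {}"
proof -
  assume k: "k < 4"
  note c = ciso_phs[OF k]
  have "interior (TT (2*k)) \<inter> interior (TT (2*k+1)) = phs k ` interior Aset \<inter> phs k ` interior gA"
    by (simp add: TT_def ciso_interior[OF c])
  also have "\<dots> = phs k ` (interior Aset \<inter> interior gA)"
    using ciso_inj[OF c] by (simp add: image_Int)
  finally show ?thesis using int_A_gA by simp
qed

lemma TT_disj: "i < 8 \<Longrightarrow> j < 8 \<Longrightarrow> i \<noteq> j \<Longrightarrow> interior (TT i) \<inter> interior (TT j) = {}"
proof -
  assume i: "i < 8" and j: "j < 8" and ij: "i \<noteq> j"
  show ?thesis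
  proof (cases "i div 2 = j div 2")
    case False
    have "interior (TT i) \<inter> interior (TT j) \<subseteq> interior (BBs (i div 2)) \<inter> interior (BBs (j div 2))"
      using TT_sub by (meson Int_mono interior_mono)
    also have "\<dots> = {}" using BBs_disj[OF _ _ False] i j by simp
    finally show ?thesis by blast
  next
    case True
    define k where "k = i div 2"
    have k: "k < 4" using i k_def by simp
    have "(i = 2*k \<and> j = 2*k+1) \<or> (i = 2*k+1 \<and> j = 2*k)" using True ij k_def by presburger
    then show ?thesis using TT_same[OF k] by (auto simp: Int_commute)
  qed
qed

lemma TT_union: "(\<Union>i<8. TT i) = (\<lambda>x. (2::real) *\<^sub>R x) ` Aset"
proof -
  have "(\<Union>i<8. TT i) = BBs 0 \<union> BBs 1 \<union> BBs 2 \<union> BBs 3"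
    unfolding UN8 BBs_def TT_def AgA_K[symmetric] by (simp add: image_Un Un_ac)
  also have "\<dots> = (\<lambda>x. (2::real) *\<^sub>R x) ` Aset"
    by (simp add: BBs_vals Aset_def image_Un scale2_bx)
  finally show ?thesis .
qed


definition RR :: "real^3^3" where "RR = vector [vector[1,0,0], vector[0,-1,0], vector[0,0,-1]]"

lemma RR_sq: "RR ** RR = mat 1"
  by (simp add: RR_def vec_eq_iff forall_3 matrix_matrix_mult_def sum_3 mat_def)
lemma RR_tr: "transpose RR = RR"
  by (simp add: RR_def vec_eq_iff forall_3 transpose_def)
lemma RR_det: "det RR = 1" by (simp add: RR_def det_3)
lemma RR_ne: "RR \<noteq> mat 1"
proof
  assume "RR = mat 1"
  then have "RR$2$2 = (mat 1 :: real^3^3)$2$2" by simp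
  then show False by (simp add: RR_def mat_def)
qed
lemma RR_orth: "orthogonal_matrix RR"
  by (simp add: orthogonal_matrix_def RR_tr RR_sq)

lemma gmap_RR: "gmap x = RR *v x + v3 0 4 2"
  by (rule vec3_eqI) (simp_all add: RR_def matrix_vector_mult_def sum_3 gmap_def)

lemma half_turn_gmap: "half_turn_motion gmap"
  unfolding half_turn_motion_def using RR_orth RR_det RR_sq RR_ne gmap_RR by blast

lemma zero3: "(0::real^3) = vector [0,0,0]" by (rule vec3_eqI) simp_all
lemma cbox0: "cbox 0 (vector [a,b,c]) = bx 0 0 0 a b c" by (simp add: bx_def zero3[symmetric])

lemma ciso_id: "ciso id id" by (rule cisoI) auto

lemma half_dist: "dist ((1/2::real) *\<^sub>R x) ((1/2) *\<^sub>R y) = 1/2 * dist x (y::real^3)"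
  by (simp add: dist_norm scaleR_diff_right[symmetric])

lemma Aset_solid: "Aset homeomorphic solid_torus"
proof -
  have "Mset homeomorphic (RB \<times> sphere (0::real^2) 1)" using hf_homeo homeomorphic_def by blast
  also have "\<dots> homeomorphic (cball (0::real^2) 1 \<times> sphere (0::real^2) 1)"
    by (rule homeomorphic_Times_sets[OF RB_homeo homeomorphic_refl])
  finally have "Mset homeomorphic (cball (0::real^2) 1 \<times> sphere (0::real^2) 1)" .
  then show ?thesis using Aset_homeo_M homeomorphic_trans unfolding solid_torus_def by blast
qed

lemma Aset_int: "interior Aset homeomorphic open_solid_torus"
proof -
  have "interior Aset homeomorphic interior Mset"
    by (rule homeomorphic_interiors_same_dimension[OF Aset_homeo_M]) simp
  then have 1: "interior Aset homeomorphic Mo" by (simp add: interior_Mset)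
  have "Mo \<subseteq> Mset" by (auto simp: Mo_def Mset_def)
  then have "homeomorphism Mo (RBo \<times> sphere (0::real^2) 1) hf hg"
    using homeomorphism_of_subsets[OF hf_homeo _ _ hf_image_Mo] by blast
  then have 2: "Mo homeomorphic (RBo \<times> sphere (0::real^2) 1)" using homeomorphic_def by blast
  have 3: "(RBo \<times> sphere (0::real^2) 1) homeomorphic (ball (0::real^2) 1 \<times> sphere (0::real^2) 1)"
    by (rule homeomorphic_Times_sets[OF RBo_homeo homeomorphic_refl])
  show ?thesis using homeomorphic_trans[OF homeomorphic_trans[OF 1 2] 3] unfolding open_solid_torus_def .
qed

lemma Aset_int_conn: "connected (interior Aset)"
proof -
  have "connected (ball (0::real^2) 1 \<times> sphere (0::real^2) 1)"
    by (intro connected_Times connected_ball connected_sphere) simp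
  then show ?thesis using homeomorphic_connectedness[OF Aset_int] unfolding open_solid_torus_def by blast
qed

lemma Aset_rep: "rep_tile 8 Aset"
  unfolding rep_tile_def
proof (intro conjI exI[of _ TT])
  show "closed Aset" unfolding Aset_def bx_def by (intro closed_Un closed_cbox)
  show "bounded Aset" by (simp add: Aset_def bx_def)
  have "v3 1 1 (1/2) \<in> interior (bx 0 0 0 2 4 1)" by (simp add: interior_bx)
  moreover have "interior (bx 0 0 0 2 4 1) \<subseteq> interior Aset" by (rule interior_mono) (auto simp: Aset_def)
  ultimately show "interior Aset \<noteq> {}" by blast
  show "\<forall>i<8. congruent (TT i) Aset" using TT_congruent by blast
  show "\<forall>i<8. \<forall>j<8. i \<noteq> j \<longrightarrow> interior (TT i) \<inter> interior (TT j) = {}" using TT_disj by blast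
  show "similar_sets (\<Union>i<8. TT i) Aset"
    unfolding similar_sets_def TT_union
  proof (intro exI[of _ "\<lambda>x. (1/2::real) *\<^sub>R x"] exI[of _ "1/2::real"] conjI allI)
    show "surj (\<lambda>x::real^3. (1/2::real) *\<^sub>R x)"
      by (rule surjI[of _ "\<lambda>x. 2 *\<^sub>R x"]) simp
    show "dist ((1/2::real) *\<^sub>R x) ((1/2) *\<^sub>R y) = 1/2 * dist x y" for x y :: "real^3" by (rule half_dist)
    show "(\<lambda>x. (1/2::real) *\<^sub>R x) ` (\<lambda>x. 2 *\<^sub>R x) ` Aset = Aset" by (simp add: image_image)
  qed simp
qed

definition BBf :: "nat \<Rightarrow> (real^3) set" where
  "BBf i = [bx 0 0 0 2 4 1, bx 2 0 0 6 1 2, bx 2 2 0 6 3 2, bx 6 0 0 8 4 1] ! i"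

lemma BBf_cong: "\<forall>i<4. congruent (BBf i) (cbox 0 (vector [4, 2, 1]))"
  unfolding all4 BBf_def cbox0
  using ciso_congruent[OF ciso_ph1, of "bx 0 0 0 2 4 1"] ciso_congruent[OF ciso_be2, of "bx 2 0 0 6 1 2"]
    ciso_congruent[OF ciso_be3, of "bx 2 2 0 6 3 2"] ciso_congruent[OF ciso_be4, of "bx 6 0 0 8 4 1"]
  by (simp add: ph1_bx be2_bx be3_bx be4_bx)

lemma BBf_disj: "\<forall>i<4. \<forall>j<4. i \<noteq> j \<longrightarrow> interior (BBf i) \<inter> interior (BBf j) = {}"
  unfolding all4 BBf_def by (simp add: bx_idisj)

lemma BBf_union: "Aset = (\<Union>i<4. BBf i)"
  unfolding UN4 BBf_def by (simp add: Aset_def)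

theorem mainTheorem2:
  shows "\<exists>A :: (real^3) set.
     rep_tile 8 A \<and>
     A homeomorphic solid_torus \<and>
     connected (interior A) \<and> interior A homeomorphic open_solid_torus \<and>
     (\<exists>B :: nat \<Rightarrow> (real^3) set.
        (\<forall>i<4. congruent (B i) (cbox 0 (vector [4, 2, 1]))) \<and>
        (\<forall>i<4. \<forall>j<4. i \<noteq> j \<longrightarrow> interior (B i) \<inter> interior (B j) = {}) \<and>
        A = (\<Union>i<4. B i)) \<and>
     (\<exists>g. half_turn_motion g \<and>
        interior A \<inter> interior (g ` A) = {} \<and>
        congruent (A \<union> g ` A) (cbox 0 (vector [8, 4, 2]))) \<and>
     (\<exists>T :: nat \<Rightarrow> (real^3) set.
        (\<forall>i<8. congruent (T i) A) \<and>
        (\<forall>i<8. \<forall>j<8. i \<noteq> j \<longrightarrow> interior (T i) \<inter> interior (T j) = {}) \<and>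
        (\<Union>i<8. T i) = (\<lambda>x. 2 *\<^sub>R x) ` A)"
proof (intro exI[of _ Aset] conjI)
  show "rep_tile 8 Aset" by (rule Aset_rep)
  show "Aset homeomorphic solid_torus" by (rule Aset_solid)
  show "connected (interior Aset)" by (rule Aset_int_conn)
  show "interior Aset homeomorphic open_solid_torus" by (rule Aset_int)
  show "\<exists>B :: nat \<Rightarrow> (real^3) set.
        (\<forall>i<4. congruent (B i) (cbox 0 (vector [4, 2, 1]))) \<and>
        (\<forall>i<4. \<forall>j<4. i \<noteq> j \<longrightarrow> interior (B i) \<inter> interior (B j) = {}) \<and>
        Aset = (\<Union>i<4. B i)"
    using BBf_cong BBf_disj BBf_union by blast
  show "\<exists>g. half_turn_motion g \<and> interior Aset \<inter> interior (g ` Aset) = {} \<and>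
        congruent (Aset \<union> g ` Aset) (cbox 0 (vector [8, 4, 2]))"
  proof (intro exI[of _ gmap] conjI)
    show "half_turn_motion gmap" by (rule half_turn_gmap)
    show "interior Aset \<inter> interior (gmap ` Aset) = {}" using int_A_gA gmap_Aset by simp
    show "congruent (Aset \<union> gmap ` Aset) (cbox 0 (vector [8, 4, 2]))"
      using ciso_congruent[OF ciso_id, of "Aset \<union> gmap ` Aset"] gmap_Aset AgA_K by (simp add: cbox0)
  qed
  show "\<exists>T :: nat \<Rightarrow> (real^3) set.
        (\<forall>i<8. congruent (T i) Aset) \<and>
        (\<forall>i<8. \<forall>j<8. i \<noteq> j \<longrightarrow> interior (T i) \<inter> interior (T j) = {}) \<and>
        (\<Union>i<8. T i) = (\<lambda>x. 2 *\<^sub>R x) ` Aset"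
    using TT_congruent TT_disj TT_union by blast
qed


end
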